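(* Let $d\ge3$ and let $\mathcal{F}_d$ be the family of all polytopes $P(V)=\mathrm{conv}(V)$ with $V\subseteq\{0,1\}^d$ such that: (a) $\{0,1\}^{d-1}\times\{0\}\subseteq V$; (b) $e_d\in V$ and $\mathbf{1}\in V$; (c) $e_d+e_1\notin V$ and $\mathbf{1}-e_1\notin V$. Then $\mathcal{F}_d$ consists of $2^{2^{d-1}-4}$ different full-dimensional $0/1$-polytopes in $[0,1]^d$; any two polytopes in $\mathcal{F}_d$ are $0/1$-equivalent if and only if they are combinatorially equivalent; and for $d\ge6$, $\mathcal{F}_d$ contains more than $2^{2^{d-2}}$ pairwise combinatorially non-equivalent $d$-dimensional $0/1$-polytopes.
   Context: $e_i$ denotes the $i$-th unit vector and $\mathbf{1}$ the all-ones vector in $\mathbb{R}^d$. Two $0/1$-polytopes are $0/1$-equivalent if one is mapped onto the other by a symmetry of the cube $[0,1]^d$ (generated by coordinate permutations and switching maps $x_i\mapsto 1-x_i$). Two polytopes are combinatorially equivalent if their face lattices are isomorphic. *)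

theory Defs
  imports "HOL-Analysis.Analysis"
begin

text \<open>Points of R^d are vectors real^'n with d = CARD('n). The coordinate type is
  linearly ordered so that the first coordinate (index 1) is Min UNIV and the
  last coordinate (index d) is Max UNIV.\<close>

definition first_coord :: "'n::{finite,linorder}" where
  "first_coord = Min UNIV"

definition last_coord :: "'n::{finite,linorder}" where
  "last_coord = Max UNIV"

definition cube01 :: "(real^'n) set" where
  "cube01 = {x. \<forall>i. x $ i = 0 \<or> x $ i = 1}"

definition Fd_vertex_sets :: "(real^'n::{finite,linorder}) set set" where
  "Fd_vertex_sets = {V. V \<subseteq> cube01
      \<and> {x \<in> cube01. x $ last_coord = 0} \<subseteq> V
      \<and> axis last_coord 1 \<in> V \<and> vec 1 \<in> V
      \<and> axis last_coord 1 + axis first_coord 1 \<notin> V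
      \<and> vec 1 - axis first_coord 1 \<notin> V}"

definition Fd :: "(real^'n::{finite,linorder}) set set" where
  "Fd = (\<lambda>V. convex hull V) ` Fd_vertex_sets"

definition coord_perm_map :: "('n \<Rightarrow> 'n) \<Rightarrow> real^'n \<Rightarrow> real^'n" where
  "coord_perm_map \<sigma> x = (\<chi> i. x $ \<sigma> i)"

definition switch_map :: "'n \<Rightarrow> real^'n \<Rightarrow> real^'n" where
  "switch_map j x = (\<chi> i. if i = j then 1 - x $ i else x $ i)"

inductive_set cube_syms :: "(real^'n \<Rightarrow> real^'n) set" where
  id_sym: "id \<in> cube_syms"
| perm_sym: "\<sigma> permutes UNIV \<Longrightarrow> g \<in> cube_syms \<Longrightarrow> coord_perm_map \<sigma> \<circ> g \<in> cube_syms"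
| switch_sym: "g \<in> cube_syms \<Longrightarrow> switch_map j \<circ> g \<in> cube_syms"

definition zo_equivalent :: "(real^'n) set \<Rightarrow> (real^'n) set \<Rightarrow> bool" where
  "zo_equivalent P Q \<longleftrightarrow> (\<exists>g \<in> cube_syms. g ` P = Q)"

definition comb_equivalent :: "('a::real_vector) set \<Rightarrow> ('b::real_vector) set \<Rightarrow> bool" where
  "comb_equivalent P Q \<longleftrightarrow> (\<exists>f. bij_betw f {F. F face_of P} {G. G face_of Q}
      \<and> (\<forall>F1 \<in> {F. F face_of P}. \<forall>F2 \<in> {F. F face_of P}. F1 \<subseteq> F2 \<longleftrightarrow> f F1 \<subseteq> f F2))"

end

theory Submission
  imports Defs
begin

definition pt :: "'n set \<Rightarrow> real^'n" where "pt S = (\<chi> k. if k \<in> S then 1 else 0)"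

definition nf :: "('n \<Rightarrow> 'n) \<Rightarrow> ('n \<Rightarrow> bool) \<Rightarrow> real^'n \<Rightarrow> real^'n" where
  "nf p s x = (\<chi> k. if s k then 1 - x $ p k else x $ p k)"

definition box01 :: "(real^'n) set" where "box01 = {x. \<forall>i. 0 \<le> x$i \<and> x$i \<le> 1}"

lemma pt_nth[simp]: "pt S $ k = (if k \<in> S then 1 else 0)"
  by (simp add: pt_def)

lemma pt_inj: "pt S = pt T \<longleftrightarrow> S = T"
  by (auto simp: vec_eq_iff split: if_splits)

lemma pt_in_cube[simp]: "pt S \<in> cube01"
  by (simp add: cube01_def)

lemma cube_eq_pt: "x \<in> cube01 \<Longrightarrow> x = pt {i. x $ i = 1}"
  by (auto simp: cube01_def vec_eq_iff)

lemma cube01_image: "cube01 = range pt"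
  using cube_eq_pt by auto

lemma finite_cube01: "finite (cube01 :: (real^'n) set)"
  unfolding cube01_image by simp

lemma cube_sub_box: "cube01 \<subseteq> box01"
proof
  fix x :: "real^'n" assume "x \<in> cube01"
  then have *: "x $ i = 0 \<or> x $ i = 1" for i by (simp add: cube01_def)
  show "x \<in> box01" unfolding box01_def
  proof (intro CollectI allI)
    fix i from *[of i] show "0 \<le> x $ i \<and> x $ i \<le> 1" by auto
  qed
qed

lemma convex_box01: "convex box01"
proof -
  have eq: "box01 = (\<Inter>i. {x. 0 \<le> x $ i} \<inter> {x. x $ i \<le> 1})"
    by (auto simp: box01_def)
  have c1: "convex {x::real^'n. 0 \<le> x $ i}" for i
    using convex_halfspace_ge[of 0 "axis i (1::real)"] by (simp add: inner_axis inner_commute)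
  have c2: "convex {x::real^'n. x $ i \<le> 1}" for i
    using convex_halfspace_le[of "axis i (1::real)" 1] by (simp add: inner_axis inner_commute)
  show ?thesis unfolding eq
    by (intro convex_INT convex_Int c1 c2)
qed

lemma cube_coord: "x \<in> cube01 \<Longrightarrow> x $ i = 0 \<or> x $ i = 1"
  by (simp add: cube01_def)

lemma switch_nth: "switch_map j x $ k = (if k = j then 1 - x $ k else x $ k)"
  by (simp add: switch_map_def)

lemma switch_pt: "switch_map j (pt S) = pt (if j \<in> S then S - {j} else insert j S)"
  by (auto simp: vec_eq_iff switch_nth)

lemma switch_cube: "x \<in> cube01 \<Longrightarrow> switch_map j x \<in> cube01"
  by (auto simp: cube01_def switch_nth)

lemma switch_invol[simp]: "switch_map j (switch_map j x) = x"
  by (simp add: vec_eq_iff switch_nth)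

lemma inj_switch: "inj (switch_map j)"
  by (rule injI) (metis switch_invol)

lemma inner_switch: "a \<bullet> switch_map j x = a \<bullet> x + (1 - 2 * x $ j) * a $ j"
proof -
  have eq: "switch_map j x = x + (1 - 2 * x $ j) *\<^sub>R axis j 1"
    by (auto simp: vec_eq_iff switch_nth axis_def)
  have "a \<bullet> switch_map j x = a \<bullet> (x + (1 - 2 * x $ j) *\<^sub>R axis j 1)"
    by (subst eq) (rule refl)
  also have "\<dots> = a \<bullet> x + (1 - 2 * x $ j) * a $ j"
    by (simp add: inner_add_right inner_axis)
  finally show ?thesis .
qed

lemma inner_supp:
  assumes "\<And>k. k \<notin> K \<Longrightarrow> a $ k = 0"
  shows "a \<bullet> (x::real^'n) = (\<Sum>k\<in>K. a $ k * x $ k)"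
proof -
  have "a \<bullet> x = (\<Sum>k\<in>UNIV. a $ k * x $ k)" by (simp add: inner_vec_def)
  also have "\<dots> = (\<Sum>k\<in>K. a $ k * x $ k)"
    by (rule sum.mono_neutral_right) (auto simp: assms)
  finally show ?thesis .
qed

lemma inner_pt: "a \<bullet> pt S = (\<Sum>k\<in>S. a $ k)"
proof -
  have "a \<bullet> pt S = (\<Sum>k\<in>UNIV. a $ k * (if k \<in> S then 1 else 0))" by (simp add: inner_vec_def)
  also have "\<dots> = (\<Sum>k\<in>S. a $ k)"
    by (simp add: if_distrib sum.If_cases)
  finally show ?thesis .
qed

lemma one_pt: "(1::real^'n) = pt UNIV"
  by (simp add: vec_eq_iff)

lemma axis_pt: "axis i (1::real) = pt {i}"
  by (simp add: vec_eq_iff axis_def)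

lemma vec1_pt: "vec 1 = pt UNIV"
  by (simp add: vec_eq_iff)

lemma axis_sum_pt: "i \<noteq> j \<Longrightarrow> axis i (1::real) + axis j 1 = pt {i, j}"
  by (auto simp: vec_eq_iff axis_def)

lemma vec1_minus_pt: "(1::real^'n) - axis i (1::real) = pt (- {i})"
  by (auto simp: vec_eq_iff axis_def)

lemma card3_facts:
  assumes "CARD('n::{finite,linorder}) \<ge> 3"
  shows "(first_coord::'n) \<noteq> last_coord" and "\<exists>k::'n. k \<noteq> first_coord \<and> k \<noteq> last_coord"
proof -
  have c2: "card {first_coord::'n, last_coord} \<le> 2"
    by (simp add: card_insert_le_m1)
  have "card (UNIV - {first_coord::'n, last_coord}) = CARD('n) - card {first_coord::'n, last_coord}"
    by (simp add: card_Diff_subset)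
  with c2 assms have "card (UNIV - {first_coord::'n, last_coord}) > 0" by linarith
  then obtain k where "k \<in> UNIV - {first_coord::'n, last_coord}"
    by (metis card.empty ex_in_conv less_irrefl)
  then show "\<exists>k::'n. k \<noteq> first_coord \<and> k \<noteq> last_coord" by blast
  show "(first_coord::'n) \<noteq> last_coord"
  proof
    assume eq: "(first_coord::'n) = last_coord"
    have all: "x = first_coord" for x :: 'n
    proof -
      have "first_coord \<le> x" unfolding first_coord_def by simp
      moreover have "x \<le> last_coord" unfolding last_coord_def by simp
      ultimately show ?thesis using eq by simp
    qed
    then have "(UNIV::'n set) = {first_coord}" by auto
    then have "card (UNIV::'n set) = card {first_coord::'n}" by (rule arg_cong[where f=card])
    then have "CARD('n) = 1" by simp
    with assms show False by simp
  qed
qed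


lemma box_sub: "V \<subseteq> cube01 \<Longrightarrow> convex hull V \<subseteq> box01"
  by (rule hull_minimal[where S=convex]) (use cube_sub_box convex_box01 in auto)

lemma finite_sub_cube: "V \<subseteq> cube01 \<Longrightarrow> finite V"
  using finite_cube01 finite_subset by blast

lemma cube_extreme:
  assumes "R \<subseteq> box01" "v \<in> cube01" "v \<in> R"
  shows "v extreme_point_of R"
  unfolding extreme_point_of_def
proof (intro conjI ballI)
  show "v \<in> R" by fact
  fix a b assume ab: "a \<in> R" "b \<in> R"
  show "v \<notin> open_segment a b"
  proof
    assume "v \<in> open_segment a b"
    then obtain u where ne: "a \<noteq> b" and u: "0 < u" "u < 1" and v: "v = (1 - u) *\<^sub>R a + u *\<^sub>R b"
      by (auto simp: in_segment)
    have "a $ i = b $ i" for i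
    proof -
      have vi: "v $ i = (1 - u) * a $ i + u * b $ i" using v by simp
      have a01: "0 \<le> a $ i" "a $ i \<le> 1" and b01: "0 \<le> b $ i" "b $ i \<le> 1"
        using ab assms(1) by (auto simp: box01_def)
      have "v $ i = 0 \<or> v $ i = 1" using assms(2) by (simp add: cube01_def)
      then show ?thesis
      proof
        assume "v $ i = 0"
        then have "(1 - u) * a $ i + u * b $ i = 0" using vi by simp
        moreover have "(1 - u) * a $ i \<ge> 0" "u * b $ i \<ge> 0" using u a01 b01 by auto
        ultimately have "(1 - u) * a $ i = 0" "u * b $ i = 0" by linarith+
        then show ?thesis using u by simp
      next
        assume "v $ i = 1"
        then have "(1 - u) * (1 - a $ i) + u * (1 - b $ i) = 0" using vi by (simp add: algebra_simps)
        moreover have "(1 - u) * (1 - a $ i) \<ge> 0" "u * (1 - b $ i) \<ge> 0" using u a01 b01 by auto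
        ultimately have "(1 - u) * (1 - a $ i) = 0" "u * (1 - b $ i) = 0" by linarith+
        then show ?thesis using u by simp
      qed
    qed
    then have "a = b" by (simp add: vec_eq_iff)
    with ne show False by simp
  qed
qed

lemma cube_in_hull:
  assumes "V \<subseteq> cube01" "v \<in> cube01"
  shows "v \<in> convex hull V \<longleftrightarrow> v \<in> V"
proof
  assume "v \<in> convex hull V"
  then have "v extreme_point_of convex hull V"
    using cube_extreme box_sub assms by blast
  then show "v \<in> V" by (rule extreme_point_of_convex_hull)
qed (rule hull_inc)

lemma vertex_face:
  assumes "V \<subseteq> cube01" "v \<in> V"
  shows "{v} face_of convex hull V"
  unfolding face_of_singleton
  by (rule cube_extreme[OF box_sub[OF assms(1)] subsetD[OF assms] hull_inc[OF assms(2)]])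

lemma face_conv:
  assumes "V \<subseteq> cube01" "F face_of convex hull V"
  shows "F = convex hull (F \<inter> V)"
proof -
  have c: "compact V" using finite_sub_cube[OF assms(1)] by (rule finite_imp_compact)
  obtain S' where S': "S' \<subseteq> V" "F = convex hull S'"
    by (rule face_of_convex_hull_subset[OF c assms(2)])
  have "S' \<subseteq> F" using S'(2) hull_subset by (metis)
  then have "S' \<subseteq> F \<inter> V" using S'(1) by blast
  then have "convex hull S' \<subseteq> convex hull (F \<inter> V)" by (rule hull_mono)
  then have "F \<subseteq> convex hull (F \<inter> V)" using S'(2) by simp
  moreover have "convex hull (F \<inter> V) \<subseteq> F"
    by (rule hull_minimal[where S=convex]) (use face_of_imp_convex[OF assms(2)] in auto)
  ultimately show ?thesis by blast
qed

lemma face_vertex_sub: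
  assumes "V \<subseteq> cube01" "F face_of convex hull V" "convex C" "F \<inter> V \<subseteq> C"
  shows "F \<subseteq> C"
proof -
  have "convex hull (F \<inter> V) \<subseteq> C" by (rule hull_minimal[where S=convex]) (use assms in auto)
  then show ?thesis using face_conv[OF assms(1,2)] by simp
qed

lemma face_nonempty_vertex:
  assumes "V \<subseteq> cube01" "F face_of convex hull V" "F \<noteq> {}"
  shows "\<exists>v\<in>V. v \<in> F"
proof (rule ccontr)
  assume "\<not> (\<exists>v\<in>V. v \<in> F)"
  then have "F \<inter> V = {}" by blast
  then have "F = {}" using face_conv[OF assms(1,2)] by simp
  with assms(3) show False by simp
qed

lemma face_exposed:
  assumes "V \<subseteq> cube01" "F face_of convex hull V"
  shows "\<exists>a b. (\<forall>x\<in>convex hull V. a \<bullet> x \<le> b) \<and> F = convex hull V \<inter> {x. a \<bullet> x = b}"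
proof -
  have "polyhedron (convex hull V)"
    using polytope_imp_polyhedron polytope_convex_hull finite_sub_cube[OF assms(1)] by blast
  then have "F exposed_face_of convex hull V"
    using exposed_face_of_polyhedron assms(2) by blast
  then show ?thesis unfolding exposed_face_of_def by blast
qed


definition Bot :: "(real^'n::{finite,linorder}) set" where "Bot = {x \<in> cube01. x $ last_coord = 0}"
definition Top :: "(real^'n::{finite,linorder}) set" where "Top = {x \<in> cube01. x $ last_coord = 1}"

lemma convex_coord_eq: "convex {x::real^'n. x $ i = c}"
  using convex_hyperplane[of "axis i (1::real)" c] by (simp add: inner_axis inner_commute)

lemma finite_Bot: "finite (Bot::(real^'n::{finite,linorder}) set)" and finite_Top: "finite (Top::(real^'n::{finite,linorder}) set)"
  using finite_cube01 by (auto simp: Bot_def Top_def)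

lemma Top_switch: "Top = switch_map last_coord ` Bot"
proof
  show "switch_map last_coord ` Bot \<subseteq> Top"
    by (auto simp: Bot_def Top_def switch_cube switch_nth)
  show "Top \<subseteq> switch_map last_coord ` Bot"
  proof
    fix x :: "real^'n::{finite,linorder}" assume x: "x \<in> Top"
    have "switch_map last_coord x \<in> Bot" using x by (auto simp: Bot_def Top_def switch_cube switch_nth)
    then show "x \<in> switch_map last_coord ` Bot" by (metis image_eqI switch_invol)
  qed
qed

lemma card_Top: "card (Top::(real^'n::{finite,linorder}) set) = card (Bot::(real^'n::{finite,linorder}) set)"
  unfolding Top_switch
  apply (rule card_image)
  apply (rule inj_on_subset[OF inj_switch])
  apply simp
  done

lemma pt_Bot: "pt S \<in> Bot \<longleftrightarrow> last_coord \<notin> S"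
  by (simp add: Bot_def)

lemma pt_Top: "pt S \<in> Top \<longleftrightarrow> last_coord \<in> S"
  by (simp add: Top_def)

lemma card_Bot_pos: "card (Bot::(real^'n::{finite,linorder}) set) > 0"
proof -
  have "pt {} \<in> (Bot::(real^'n::{finite,linorder}) set)" by (simp add: pt_Bot)
  then show ?thesis using finite_Bot card_gt_0_iff by blast
qed

locale fam =
  fixes V :: "(real^'n::{finite,linorder}) set"
  assumes card3: "CARD('n) \<ge> 3" and inF: "V \<in> Fd_vertex_sets"
begin

abbreviation "R \<equiv> convex hull V"
abbreviation "lc \<equiv> (last_coord :: 'n)"
abbreviation "fc \<equiv> (first_coord :: 'n)"

definition BB where "BB = R \<inter> {x. x $ lc = 0}"
definition GG where "GG i c = R \<inter> {x. x $ lc = 0 \<and> x $ i = c}"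
definition FF where "FF i c = R \<inter> {x. x $ i = c}"

lemma fl: "fc \<noteq> lc" using card3_facts(1)[OF card3] .

lemma Vcube: "V \<subseteq> cube01" using inF by (simp add: Fd_vertex_sets_def)
lemma BotV: "Bot \<subseteq> V" using inF by (simp add: Fd_vertex_sets_def Bot_def)
lemma ptV: "lc \<notin> S \<Longrightarrow> pt S \<in> V" using BotV pt_Bot by blast
lemma ptl: "pt {lc} \<in> V" using inF by (simp add: Fd_vertex_sets_def axis_pt)
lemma ptU: "pt UNIV \<in> V" using inF by (simp add: Fd_vertex_sets_def one_pt)
lemma ptlf: "pt {lc, fc} \<notin> V" using inF fl by (simp add: Fd_vertex_sets_def axis_sum_pt)
lemma ptnf: "pt (- {fc}) \<notin> V" using inF by (simp add: Fd_vertex_sets_def vec1_minus_pt)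
lemma VR: "V \<subseteq> R" by (rule hull_subset)
lemma Rbox: "R \<subseteq> box01" by (rule box_sub[OF Vcube])
lemma convR: "convex R" by simp
lemma Rcoord: "x \<in> R \<Longrightarrow> 0 \<le> x $ i \<and> x $ i \<le> 1" using Rbox by (auto simp: box01_def)
lemma Vcoord: "v \<in> V \<Longrightarrow> v $ i = 0 \<or> v $ i = 1" using Vcube cube_coord by blast

lemma R_face: "R face_of R" by (simp add: face_of_refl)

lemma BB_face: "BB face_of R"
proof -
  have "R \<inter> {x. (- axis lc (1::real)) \<bullet> x = 0} face_of R"
    by (rule face_of_Int_supporting_hyperplane_le) (auto simp: inner_axis inner_commute dest: Rcoord)
  moreover have "{x. (- axis lc (1::real)) \<bullet> x = (0::real)} = {x. x $ lc = 0}"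
    by (auto simp: inner_axis inner_commute inner_real_def)
  ultimately show ?thesis by (simp add: BB_def)
qed

lemma FF_face: assumes "c = 0 \<or> c = 1" shows "FF i c face_of R"
  using assms
proof
  assume c: "c = 0"
  have "R \<inter> {x. (- axis i (1::real)) \<bullet> x = 0} face_of R"
    by (rule face_of_Int_supporting_hyperplane_le) (auto simp: inner_axis inner_commute dest: Rcoord)
  moreover have "{x. (- axis i (1::real)) \<bullet> x = (0::real)} = {x. x $ i = 0}"
    by (auto simp: inner_axis inner_commute inner_real_def)
  ultimately show ?thesis by (simp add: FF_def c)
next
  assume c: "c = 1"
  have "R \<inter> {x. (axis i (1::real)) \<bullet> x = 1} face_of R"
    by (rule face_of_Int_supporting_hyperplane_le) (auto simp: inner_axis inner_commute dest: Rcoord)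
  moreover have "{x. (axis i (1::real)) \<bullet> x = (1::real)} = {x. x $ i = 1}"
    by (auto simp: inner_axis inner_commute inner_real_def)
  ultimately show ?thesis by (simp add: FF_def c)
qed

lemma GG_eq: "GG i c = BB \<inter> FF i c"
  by (auto simp: GG_def BB_def FF_def)

lemma GG_face: assumes "c = 0 \<or> c = 1" shows "GG i c face_of R"
  unfolding GG_eq by (rule face_of_Int[OF BB_face FF_face[OF assms]])

lemma vertex_face_R: "v \<in> V \<Longrightarrow> {v} face_of R"
  by (rule vertex_face[OF Vcube])

lemma BB_V: "BB \<inter> V = Bot"
  using Vcube BotV VR by (auto simp: BB_def Bot_def)

end


context fam begin

lemma exposedR:
  assumes "H face_of R"
  obtains a b where "\<forall>x\<in>R. a \<bullet> x \<le> b" "H = R \<inter> {x. a \<bullet> x = b}"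
  using face_exposed[OF Vcube assms] by blast

lemma over_G:
  assumes i: "i \<noteq> lc" and c: "c = 0 \<or> c = 1" and H: "H face_of R" and sub: "GG i c \<subseteq> H"
  shows "H = GG i c \<or> H = BB \<or> H = FF i c \<or> H = R"
proof -
  obtain a b where val: "\<forall>x\<in>R. a \<bullet> x \<le> b" and Heq: "H = R \<inter> {x. a \<bullet> x = b}"
    by (rule exposedR[OF H])
  define u0 where "u0 = pt (if c = 1 then {i} else {})"
  have u0V: "u0 \<in> V" unfolding u0_def using i by (intro ptV) auto
  have u0i: "u0 $ i = c" using c by (auto simp: u0_def)
  have u0l: "u0 $ lc = 0" using i by (auto simp: u0_def)
  have inG: "a \<bullet> v = b" if "v \<in> V" "v $ lc = 0" "v $ i = c" for v
  proof -
    have "v \<in> GG i c" using that VR by (auto simp: GG_def)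
    then have "v \<in> H" using sub by blast
    then show "a \<bullet> v = b" using Heq by blast
  qed
  have ab0: "a \<bullet> u0 = b" using inG[OF u0V u0l u0i] .
  have aj: "a $ j = 0" if "j \<notin> {i, lc}" for j
  proof -
    have sV: "switch_map j u0 \<in> V" unfolding u0_def switch_pt using that i by (intro ptV) auto
    have "(switch_map j u0) $ lc = 0" "(switch_map j u0) $ i = c" using that u0l u0i by (auto simp: switch_nth)
    then have "a \<bullet> switch_map j u0 = b" using inG sV by blast
    moreover have "u0 $ j = 0" using that by (auto simp: u0_def)
    ultimately show ?thesis using ab0 by (simp add: inner_switch)
  qed
  have ax: "a \<bullet> x = a $ i * x $ i + a $ lc * x $ lc" for x
    using inner_supp[of "{i, lc}" a x] aj i by simp
  have b: "b = a $ i * c" using ab0 ax[of u0] u0i u0l by simp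
  have s1: "a $ i * (1 - c) \<le> a $ i * c"
  proof -
    have "switch_map i u0 \<in> V" unfolding u0_def switch_pt using i by (intro ptV) auto
    then have "a \<bullet> switch_map i u0 \<le> b" using val VR by blast
    then show ?thesis using ax[of "switch_map i u0"] b u0i u0l i by (simp add: switch_nth)
  qed
  have s2: "a $ lc \<le> a $ i * c"
  proof -
    have "a \<bullet> pt {lc} \<le> b" using val VR ptl by blast
    then show ?thesis using ax[of "pt {lc}"] b i by simp
  qed
  have s3: "a $ i + a $ lc \<le> a $ i * c"
  proof -
    have "a \<bullet> pt UNIV \<le> b" using val VR ptU by blast
    then show ?thesis using ax[of "pt UNIV"] b by simp
  qed
  have key: "a \<bullet> x = b \<longleftrightarrow> (a $ i = 0 \<or> x $ i = c) \<and> (a $ lc = 0 \<or> x $ lc = 0)" if xR: "x \<in> R" for x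
  proof -
    have xi: "0 \<le> x $ i" "x $ i \<le> 1" and xl: "0 \<le> x $ lc" "x $ lc \<le> 1" using Rcoord[OF xR] by auto
    have t: "a $ i * (x $ i - c) \<le> 0 \<and> a $ lc * x $ lc \<le> 0"
      using c
    proof
      assume c0: "c = 0"
      then have "a $ i \<le> 0" "a $ lc \<le> 0" using s1 s2 by auto
      then show ?thesis using xi xl c0 by (simp add: mult_nonpos_nonneg)
    next
      assume c1: "c = 1"
      then have "0 \<le> a $ i" "a $ lc \<le> 0" using s1 s3 by auto
      then show ?thesis using xi xl c1 by (simp add: mult_nonneg_nonpos mult_nonpos_nonneg)
    qed
    have "a \<bullet> x = b \<longleftrightarrow> a $ i * (x $ i - c) + a $ lc * x $ lc = 0"
      using ax[of x] b by (simp add: algebra_simps)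
    also have "\<dots> \<longleftrightarrow> a $ i * (x $ i - c) = 0 \<and> a $ lc * x $ lc = 0"
      using t by linarith
    also have "\<dots> \<longleftrightarrow> (a $ i = 0 \<or> x $ i = c) \<and> (a $ lc = 0 \<or> x $ lc = 0)"
      by simp
    finally show ?thesis .
  qed
  have Heq2: "H = R \<inter> {x. (a $ i = 0 \<or> x $ i = c) \<and> (a $ lc = 0 \<or> x $ lc = 0)}"
    using Heq key by blast
  show ?thesis
  proof (cases "a $ i = 0")
    case True
    show ?thesis
    proof (cases "a $ lc = 0")
      case True
      then have "H = R" using Heq2 \<open>a $ i = 0\<close> by auto
      then show ?thesis by simp
    next
      case False
      then have "H = BB" using Heq2 \<open>a $ i = 0\<close> by (auto simp: BB_def)
      then show ?thesis by simp
    qed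
  next
    case False
    show ?thesis
    proof (cases "a $ lc = 0")
      case True
      then have "H = FF i c" using Heq2 \<open>a $ i \<noteq> 0\<close> by (auto simp: FF_def)
      then show ?thesis by simp
    next
      case False
      then have "H = GG i c" using Heq2 \<open>a $ i \<noteq> 0\<close> by (auto simp: GG_def)
      then show ?thesis by simp
    qed
  qed
qed

lemma sub_B:
  assumes H: "H face_of R" and HB: "H \<subseteq> BB" and ne: "H \<noteq> BB"
  shows "\<exists>j c. j \<noteq> lc \<and> (c = 0 \<or> c = 1) \<and> H \<subseteq> GG j c"
proof -
  obtain a b where val: "\<forall>x\<in>R. a \<bullet> x \<le> b" and Heq: "H = R \<inter> {x. a \<bullet> x = b}"
    by (rule exposedR[OF H])
  show ?thesis
  proof (cases "\<forall>j. j \<noteq> lc \<longrightarrow> a $ j = 0")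
    case True
    then have ax: "a \<bullet> x = a $ lc * x $ lc" for x using inner_supp[of "{lc}" a x] by auto
    show ?thesis
    proof (cases "b = 0")
      case True
      then have "BB \<subseteq> H" using Heq ax by (auto simp: BB_def)
      with HB ne have False by blast
      then show ?thesis ..
    next
      case False
      then have "H = {}" using HB Heq ax by (auto simp: BB_def)
      then show ?thesis using fl by blast
    qed
  next
    case False
    then obtain j where j: "j \<noteq> lc" "a $ j \<noteq> 0" by blast
    define c where "c = (if a $ j > 0 then 1 else (0::real))"
    have "H \<inter> V \<subseteq> {x. x $ lc = 0} \<inter> {x. x $ j = c}"
    proof
      fix v assume v: "v \<in> H \<inter> V"
      have vl: "v $ lc = 0" using v HB by (auto simp: BB_def)
      have vab: "a \<bullet> v = b" using v Heq by blast
      have vc: "v \<in> cube01" using v Vcube by blast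
      have "switch_map j v \<in> Bot" using vc vl j by (auto simp: Bot_def switch_cube switch_nth)
      then have "switch_map j v \<in> V" using BotV by blast
      then have "a \<bullet> switch_map j v \<le> b" using val VR by blast
      then have le: "(1 - 2 * v $ j) * a $ j \<le> 0" using vab by (simp add: inner_switch)
      have "v $ j = 0 \<or> v $ j = 1" using v Vcoord by blast
      then have "v $ j = c"
      proof
        assume "v $ j = 0" then show ?thesis using le j(2) by (auto simp: c_def)
      next
        assume "v $ j = 1" then show ?thesis using le j(2) by (auto simp: c_def)
      qed
      then show "v \<in> {x. x $ lc = 0} \<inter> {x. x $ j = c}" using vl by simp
    qed
    moreover have "convex ({x::real^'n::{finite,linorder}. x $ lc = 0} \<inter> {x. x $ j = c})"
      by (intro convex_Int convex_coord_eq)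
    ultimately have "H \<subseteq> {x. x $ lc = 0} \<inter> {x. x $ j = c}"
      using face_vertex_sub[OF Vcube H] by blast
    then have "H \<subseteq> GG j c" using face_of_imp_subset[OF H] by (auto simp: GG_def)
    moreover have "c = 0 \<or> c = 1" by (simp add: c_def)
    ultimately show ?thesis using j(1) by blast
  qed
qed

end


context fam begin

lemma half_card:
  fixes s :: "(real,'n) vec \<Rightarrow> (real,'n) vec"
  assumes "inj s" "finite Y" "X \<subseteq> Y" "s ` X \<subseteq> Y" "X \<inter> s ` X = {}"
  shows "2 * card X \<le> card Y" "2 * card X = card Y \<Longrightarrow> X \<union> s ` X = Y"
proof -
  have fX: "finite X" using assms(2,3) finite_subset by blast
  have cs: "card (s ` X) = card X" using assms(1) by (simp add: card_image inj_on_subset)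
  have cu: "card (X \<union> s ` X) = 2 * card X" using card_Un_disjoint[OF fX finite_imageI[OF fX] assms(5)] cs by simp
  have sub: "X \<union> s ` X \<subseteq> Y" using assms(3,4) by blast
  show "2 * card X \<le> card Y" using card_mono[OF assms(2) sub] cu by simp
  show "X \<union> s ` X = Y" if "2 * card X = card Y"
    using card_subset_eq[OF assms(2) sub] cu that by simp
qed

lemma big_face:
  assumes H: "H face_of R" and ne: "H \<noteq> R" and cardH: "card (Bot::((real,'n) vec) set) \<le> card (H \<inter> V)"
  shows "H = BB"
proof -
  obtain a b where val: "\<forall>x\<in>R. a \<bullet> x \<le> b" and Heq: "H = R \<inter> {x. a \<bullet> x = b}"
    by (rule exposedR[OF H])
  define W where "W = H \<inter> V"
  have Wfin: "finite W" using finite_sub_cube[OF Vcube] by (simp add: W_def)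
  have Wab: "a \<bullet> x = b" if "x \<in> W" for x using that Heq by (auto simp: W_def)
  have Vab: "a \<bullet> x \<le> b" if "x \<in> V" for x using that val VR by blast
  have WV: "W \<subseteq> V" by (auto simp: W_def)
  show ?thesis
  proof (cases "\<forall>j. j \<noteq> lc \<longrightarrow> a $ j = 0")
    case True
    then have ax: "a \<bullet> x = a $ lc * x $ lc" for x using inner_supp[of "{lc}" a x] by auto
    have b0: "0 \<le> b" using Vab[OF ptV[of "{}"]] ax[of "pt {}"] by simp
    show ?thesis
    proof (cases "b = 0")
      case True
      have "a $ lc \<le> 0" using Vab[OF ptl] ax[of "pt {lc}"] True by simp
      moreover have "a $ lc \<noteq> 0"
      proof
        assume "a $ lc = 0" then have "H = R" using Heq ax True by auto
        with ne show False ..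
      qed
      ultimately have "a $ lc < 0" by simp
      then have "H = R \<inter> {x. x $ lc = 0}" using Heq ax True by auto
      then show ?thesis by (simp add: BB_def)
    next
      case False
      then have bpos: "b > 0" using b0 by simp
      have "W \<subseteq> Top - {pt (- {fc})}"
      proof
        fix v assume v: "v \<in> W"
        then have vV: "v \<in> V" using WV by blast
        then have "v \<in> cube01" "v $ lc = 0 \<or> v $ lc = 1" using Vcube Vcoord by auto
        moreover have "v $ lc \<noteq> 0" using Wab[OF v] ax[of v] bpos by auto
        moreover have "v \<noteq> pt (- {fc})" using vV ptnf by blast
        ultimately show "v \<in> Top - {pt (- {fc})}" by (auto simp: Top_def)
      qed
      then have "card W \<le> card (Top - {pt (- {fc})})" by (intro card_mono) (auto simp: finite_Top)
      also have "\<dots> = card (Top::((real,'n) vec) set) - 1" using fl by (simp add: pt_Top finite_Top)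
      also have "\<dots> < card (Bot::((real,'n) vec) set)" using card_Top card_Bot_pos by (metis diff_less zero_less_one)
      finally show ?thesis using cardH W_def by simp
    qed
  next
    case False
    then obtain i where i: "i \<noteq> lc" "a $ i \<noteq> 0" by blast
    define s where "s = switch_map i"
    have ss: "s (s x) = x" for x by (simp add: s_def)
    have inj_s: "inj s" by (simp add: s_def inj_switch)
    have as: "a \<bullet> s x = a \<bullet> x + (1 - 2 * x $ i) * a $ i" for x by (simp add: s_def inner_switch)
    have sW: "s x \<notin> W" if x: "x \<in> W" for x
    proof
      assume sx: "s x \<in> W"
      have "x $ i = 0 \<or> x $ i = 1" using x WV Vcoord by blast
      then have "(1 - 2 * x $ i) * a $ i \<noteq> 0" using i by auto
      then show False using Wab[OF x] Wab[OF sx] as[of x] by simp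
    qed
    have sBot: "s x \<in> Bot" if "x \<in> Bot" for x using that i by (auto simp: Bot_def s_def switch_cube switch_nth)
    have sTop: "s x \<in> Top" if "x \<in> Top" for x using that i by (auto simp: Top_def s_def switch_cube switch_nth)
    define W0 where "W0 = W \<inter> Bot"
    define W1 where "W1 = W \<inter> Top"
    have WU: "W = W0 \<union> W1"
    proof -
      have "W \<subseteq> Bot \<union> Top"
      proof
        fix v assume "v \<in> W"
        then have "v \<in> cube01" "v $ lc = 0 \<or> v $ lc = 1" using WV Vcube Vcoord by auto
        then show "v \<in> Bot \<union> Top" by (auto simp: Bot_def Top_def)
      qed
      then show ?thesis by (auto simp: W0_def W1_def)
    qed
    have Wdisj: "W0 \<inter> W1 = {}" by (auto simp: W0_def W1_def Bot_def Top_def)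
    have cW: "card W = card W0 + card W1"
      using WU Wdisj Wfin by (simp add: card_Un_disjoint)
    have d0: "W0 \<inter> s ` W0 = {}" using sW by (auto simp: W0_def)
    have d1: "W1 \<inter> s ` W1 = {}" using sW by (auto simp: W1_def)
    have i0: "W0 \<subseteq> Bot" "s ` W0 \<subseteq> Bot" using sBot by (auto simp: W0_def)
    have i1: "W1 \<subseteq> Top" "s ` W1 \<subseteq> Top" using sTop by (auto simp: W1_def)
    note h0 = half_card[OF inj_s finite_Bot i0 d0]
    note h1 = half_card[OF inj_s finite_Top i1 d1]
    have cT: "card (Top::((real,'n) vec) set) = card (Bot::((real,'n) vec) set)" by (rule card_Top)
    have e0: "2 * card W0 = card (Bot::((real,'n) vec) set)" and e1: "2 * card W1 = card (Top::((real,'n) vec) set)"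
    proof -
      have "card (Bot::((real,'n) vec) set) \<le> card W" using cardH by (simp add: W_def)
      then show "2 * card W0 = card (Bot::((real,'n) vec) set)" "2 * card W1 = card (Top::((real,'n) vec) set)"
        using h0(1) h1(1) cW cT by linarith+
    qed
    have full0: "W0 \<union> s ` W0 = Bot" by (rule h0(2)[OF e0])
    have full1: "W1 \<union> s ` W1 = Top" by (rule h1(2)[OF e1])
    define c where "c = (if a $ i > 0 then 1 else (0::real))"
    have pos: "(2 * c - 1) * a $ i > 0" using i(2) by (auto simp: c_def)
    have botc: "a \<bullet> u = b" if u: "u \<in> Bot" "u $ i = c" for u
    proof (rule ccontr)
      assume nb: "a \<bullet> u \<noteq> b"
      then have "u \<notin> W0" using Wab by (auto simp: W0_def)
      then have "u \<in> s ` W0" using full0 u by blast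
      then obtain w where w: "w \<in> W0" "u = s w" by blast
      then have "s u \<in> W0" using ss by simp
      then have e: "a \<bullet> s u = b" using Wab by (auto simp: W0_def)
      have "a \<bullet> u = a \<bullet> s (s u)" using ss by simp
      also have "\<dots> = a \<bullet> s u + (1 - 2 * (s u) $ i) * a $ i" by (rule as)
      also have "(s u) $ i = 1 - c" using u by (simp add: s_def switch_nth)
      finally have "a \<bullet> u = b + (2 * c - 1) * a $ i" using e by (simp add: algebra_simps)
      moreover have "a \<bullet> u \<le> b" using Vab BotV u by blast
      ultimately show False using pos by simp
    qed
    define u0 where "u0 = pt (if c = 1 then {i} else {})"
    have u0: "u0 \<in> Bot" "u0 $ i = c" using i(1) by (auto simp: u0_def pt_Bot c_def)
    have aj: "a $ j = 0" if "j \<notin> {i, lc}" for j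
    proof -
      have "switch_map j u0 \<in> Bot" "(switch_map j u0) $ i = c"
        using u0 that by (auto simp: Bot_def switch_cube switch_nth)
      then have "a \<bullet> switch_map j u0 = b" by (rule botc)
      moreover have "a \<bullet> u0 = b" using botc u0 by blast
      moreover have "u0 $ j = 0" using that by (auto simp: u0_def)
      ultimately show ?thesis by (simp add: inner_switch)
    qed
    have ax: "a \<bullet> x = a $ i * x $ i + a $ lc * x $ lc" for x
      using inner_supp[of "{i, lc}" a x] aj i by simp
    have topv: "a \<bullet> s x = b" if "x \<in> Top" "x \<notin> V" for x
    proof -
      have "x \<notin> W1" using that WV by (auto simp: W1_def)
      then have "x \<in> s ` W1" using full1 that by blast
      then obtain w where "w \<in> W1" "x = s w" by blast
      then have "s x \<in> W1" using ss by simp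
      then show ?thesis using Wab by (auto simp: W1_def)
    qed
    define x where "x = pt {lc, fc}"
    define y where "y = pt (- {fc})"
    have x: "x \<in> Top" "x \<notin> V" using ptlf by (auto simp: x_def pt_Top)
    have y: "y \<in> Top" "y \<notin> V" using ptnf fl by (auto simp: y_def pt_Top)
    have "a $ i * (1 - x $ i) + a $ lc = b"
      using topv[OF x] ax[of "s x"] x(1) i(1) by (simp add: s_def switch_nth Top_def)
    moreover have "a $ i * (1 - y $ i) + a $ lc = b"
      using topv[OF y] ax[of "s y"] y(1) i(1) by (simp add: s_def switch_nth Top_def)
    ultimately have e: "a $ i * (1 - x $ i) = a $ i * (1 - y $ i)" by linarith
    have "a $ i * (y $ i - x $ i) = a $ i * (1 - x $ i) - a $ i * (1 - y $ i)" by (simp add: algebra_simps)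
    then have "a $ i * (y $ i - x $ i) = 0" using e by simp
    moreover have "y $ i - x $ i \<noteq> 0" using i(1) by (auto simp: x_def y_def)
    ultimately have "a $ i = 0" by simp
    with i(2) show ?thesis by simp
  qed
qed

end


lemma nf_nth: "nf p s x $ k = (if s k then 1 - x $ p k else x $ p k)"
  by (simp add: nf_def)

lemma switches_sym:
  assumes "finite S" "g \<in> cube_syms"
  shows "(\<lambda>x. \<chi> k. if k \<in> S then 1 - g x $ k else g x $ k) \<in> cube_syms"
  using assms(1)
proof (induction S rule: finite_induct)
  case empty
  have "(\<lambda>x. \<chi> k. if k \<in> {} then 1 - g x $ k else g x $ k) = g"
    by (simp add: vec_lambda_eta)
  then show ?case using assms(2) by simp
next
  case (insert a S)
  have "(\<lambda>x. \<chi> k. if k \<in> insert a S then 1 - g x $ k else g x $ k)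
      = switch_map a \<circ> (\<lambda>x. \<chi> k. if k \<in> S then 1 - g x $ k else g x $ k)"
    using insert(2) by (auto simp: fun_eq_iff vec_eq_iff switch_nth)
  then show ?case using cube_syms.switch_sym[OF insert(3)] by simp
qed

lemma nf_sym:
  assumes "p permutes UNIV"
  shows "nf p s \<in> cube_syms"
proof -
  have g: "coord_perm_map p \<circ> id \<in> cube_syms"
    by (rule cube_syms.perm_sym[OF assms cube_syms.id_sym])
  have "(\<lambda>x. \<chi> k. if k \<in> {k. s k} then 1 - (coord_perm_map p \<circ> id) x $ k else (coord_perm_map p \<circ> id) x $ k) \<in> cube_syms"
    by (rule switches_sym[OF _ g]) simp
  moreover have "(\<lambda>x. \<chi> k. if k \<in> {k. s k} then 1 - (coord_perm_map p \<circ> id) x $ k else (coord_perm_map p \<circ> id) x $ k) = nf p s"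
    by (simp add: fun_eq_iff vec_eq_iff nf_nth coord_perm_map_def)
  ultimately show ?thesis by simp
qed

lemma sym_nf:
  assumes "g \<in> cube_syms"
  shows "\<exists>p s. p permutes UNIV \<and> g = nf p s"
  using assms
proof (induction rule: cube_syms.induct)
  case id_sym
  have "id = nf id (\<lambda>_. False)" by (simp add: fun_eq_iff vec_eq_iff nf_nth)
  then show ?case using permutes_id by blast
next
  case (perm_sym \<sigma> g)
  then obtain p s where ps: "p permutes UNIV" "g = nf p s" by blast
  have "coord_perm_map \<sigma> \<circ> g = nf (p \<circ> \<sigma>) (s \<circ> \<sigma>)"
    using ps(2) by (simp add: fun_eq_iff vec_eq_iff nf_nth coord_perm_map_def)
  moreover have "p \<circ> \<sigma> permutes UNIV" by (rule permutes_compose[OF perm_sym(1) ps(1)])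
  ultimately show ?case by blast
next
  case (switch_sym g j)
  then obtain p s where ps: "p permutes UNIV" "g = nf p s" by blast
  have "switch_map j \<circ> g = nf p (s(j := \<not> s j))"
    using ps(2) by (auto simp: fun_eq_iff vec_eq_iff nf_nth switch_nth)
  then show ?case using ps(1) by blast
qed

definition nfc :: "('n \<Rightarrow> bool) \<Rightarrow> real^'n" where "nfc s = (\<chi> k. if s k then 1 else 0)"
definition nfl :: "('n \<Rightarrow> 'n) \<Rightarrow> ('n \<Rightarrow> bool) \<Rightarrow> real^'n \<Rightarrow> real^'n" where
  "nfl p s x = (\<chi> k. (if s k then -1 else 1) * x $ p k)"

lemma nf_split: "nf p s = (\<lambda>x. nfc s + x) \<circ> nfl p s"
  by (simp add: fun_eq_iff vec_eq_iff nf_nth nfc_def nfl_def)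

lemma linear_nfl: "linear (nfl p s)"
  by (rule linearI) (simp_all add: vec_eq_iff nfl_def algebra_simps)

lemma inj_nfl:
  assumes "p permutes UNIV" shows "inj (nfl p s)"
proof (rule injI)
  fix x y assume e: "nfl p s x = nfl p s y"
  have "x $ p k = y $ p k" for k
  proof -
    have "(if s k then -1 else 1) * x $ p k = (if s k then -1 else 1) * y $ p k"
      using e by (simp add: vec_eq_iff nfl_def)
    then show ?thesis by (auto split: if_splits)
  qed
  moreover have "\<forall>k'. \<exists>k. p k = k'" using assms by (metis permutes_surj surjD)
  ultimately show "x = y" by (metis vec_eq_iff)
qed

lemma inj_nf:
  assumes "p permutes UNIV" shows "inj (nf p s)"
  unfolding nf_split using inj_nfl[OF assms] by (simp add: inj_compose)

lemma nf_hull: "nf p s ` (convex hull S) = convex hull (nf p s ` S)"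
proof -
  have "nf p s ` (convex hull S) = (\<lambda>x. nfc s + x) ` (nfl p s ` (convex hull S))"
    by (simp add: nf_split image_comp)
  also have "\<dots> = (\<lambda>x. nfc s + x) ` (convex hull (nfl p s ` S))"
    by (simp add: convex_hull_linear_image[OF linear_nfl])
  also have "\<dots> = convex hull ((\<lambda>x. nfc s + x) ` (nfl p s ` S))"
    by (simp add: convex_hull_translation)
  also have "\<dots> = convex hull (nf p s ` S)"
    by (simp add: nf_split image_comp)
  finally show ?thesis .
qed

lemma nf_face_iff:
  assumes "p permutes UNIV"
  shows "(nf p s ` F face_of nf p s ` S) \<longleftrightarrow> F face_of S"
proof -
  have "(nf p s ` F face_of nf p s ` S) \<longleftrightarrow> ((+) (nfc s) ` (nfl p s ` F) face_of (+) (nfc s) ` (nfl p s ` S))"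
    by (simp add: nf_split image_comp)
  also have "\<dots> \<longleftrightarrow> (nfl p s ` F face_of nfl p s ` S)" by (rule face_of_translation_eq)
  also have "\<dots> \<longleftrightarrow> F face_of S" by (rule face_of_linear_image[OF linear_nfl inj_nfl[OF assms]])
  finally show ?thesis .
qed

lemma nf_cube: "x \<in> cube01 \<Longrightarrow> nf p s x \<in> cube01"
  by (auto simp: cube01_def nf_nth)

lemma zo_imp_comb:
  assumes "g \<in> cube_syms" "g ` P = Q"
  shows "comb_equivalent P Q"
proof -
  obtain p s where ps: "p permutes UNIV" "g = nf p s" using sym_nf[OF assms(1)] by blast
  have inj: "inj g" using inj_nf[OF ps(1)] ps(2) by simp
  have fi: "(g ` F face_of g ` S) \<longleftrightarrow> F face_of S" for F S using nf_face_iff[OF ps(1)] ps(2) by simp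
  have bij: "bij_betw (\<lambda>F. g ` F) {F. F face_of P} {G. G face_of Q}"
  proof (rule bij_betwI')
    fix F1 F2 assume "F1 \<in> {F. F face_of P}" "F2 \<in> {F. F face_of P}"
    show "(g ` F1 = g ` F2) = (F1 = F2)" using inj by (simp add: inj_image_eq_iff)
  next
    fix F assume "F \<in> {F. F face_of P}"
    then show "g ` F \<in> {G. G face_of Q}" using fi assms(2) by auto
  next
    fix G assume G: "G \<in> {G. G face_of Q}"
    then have Gsub: "G \<subseteq> g ` P" using assms(2) face_of_imp_subset by blast
    define F where "F = P \<inter> g -` G"
    have gF: "g ` F = G" using Gsub by (auto simp: F_def)
    then have "F face_of P" using fi[of F P] G assms(2) by simp
    then show "\<exists>F\<in>{F. F face_of P}. G = g ` F" using gF by auto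
  qed
  have "\<forall>F1 \<in> {F. F face_of P}. \<forall>F2 \<in> {F. F face_of P}. F1 \<subseteq> F2 \<longleftrightarrow> g ` F1 \<subseteq> g ` F2"
    using inj by (simp add: inj_image_subset_iff)
  then show ?thesis unfolding comb_equivalent_def using bij by blast
qed

lemma comb_sym:
  assumes "comb_equivalent P Q" shows "comb_equivalent Q P"
proof -
  obtain f where f: "bij_betw f {F. F face_of P} {G. G face_of Q}"
    and o: "\<forall>F1 \<in> {F. F face_of P}. \<forall>F2 \<in> {F. F face_of P}. F1 \<subseteq> F2 \<longleftrightarrow> f F1 \<subseteq> f F2"
    using assms unfolding comb_equivalent_def by blast
  define g where "g = inv_into {F. F face_of P} f"
  have g: "bij_betw g {G. G face_of Q} {F. F face_of P}" unfolding g_def by (rule bij_betw_inv_into[OF f])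
  have fg: "f (g G) = G" if "G \<in> {G. G face_of Q}" for G
    unfolding g_def using f that by (simp add: bij_betw_inv_into_right)
  have "\<forall>G1 \<in> {G. G face_of Q}. \<forall>G2 \<in> {G. G face_of Q}. G1 \<subseteq> G2 \<longleftrightarrow> g G1 \<subseteq> g G2"
  proof (intro ballI)
    fix G1 G2 assume G: "G1 \<in> {G. G face_of Q}" "G2 \<in> {G. G face_of Q}"
    have "g G1 \<in> {F. F face_of P}" "g G2 \<in> {F. F face_of P}" using G g bij_betwE by blast+
    then have "g G1 \<subseteq> g G2 \<longleftrightarrow> f (g G1) \<subseteq> f (g G2)" using o by blast
    then show "G1 \<subseteq> G2 \<longleftrightarrow> g G1 \<subseteq> g G2" using fg G by simp
  qed
  then show ?thesis unfolding comb_equivalent_def using g by blast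
qed


context fam begin

lemma memV_BB: "v \<in> V \<Longrightarrow> v \<in> BB \<longleftrightarrow> v $ lc = 0" using VR by (auto simp: BB_def)
lemma memV_GG: "v \<in> V \<Longrightarrow> v \<in> GG i c \<longleftrightarrow> v $ lc = 0 \<and> v $ i = c" using VR by (auto simp: GG_def)
lemma memV_FF: "v \<in> V \<Longrightarrow> v \<in> FF i c \<longleftrightarrow> v $ i = c" using VR by (auto simp: FF_def)

lemma R_not_BB: "\<not> R \<subseteq> BB"
  using ptl VR by (auto simp: BB_def)

lemma FF_not_BB: assumes "i \<noteq> lc" "c = 0 \<or> c = 1" shows "\<not> FF i c \<subseteq> BB"
proof -
  define v where "v = (if c = 0 then pt {lc} else pt UNIV)"
  have "v \<in> V" using ptl ptU by (simp add: v_def)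
  moreover have "v $ i = c" "v $ lc = 1" using assms by (auto simp: v_def)
  ultimately show ?thesis using memV_FF memV_BB by force
qed

lemma GG_ne_BB: assumes "i \<noteq> lc" "c = 0 \<or> c = 1" shows "GG i c \<noteq> BB"
proof -
  define v where "v = (if c = 0 then pt {i} else pt {})"
  have "v \<in> V" using assms by (auto simp: v_def intro!: ptV)
  moreover have "v $ i \<noteq> c" "v $ lc = 0" using assms by (auto simp: v_def)
  ultimately show ?thesis using memV_GG memV_BB by blast
qed

lemma FF_ne_R: assumes "i \<noteq> lc" "c = 0 \<or> c = 1" shows "FF i c \<noteq> R"
proof -
  define v where "v = (if c = 0 then pt {i} else pt {})"
  have "v \<in> V" using assms by (auto simp: v_def intro!: ptV)
  moreover have "v $ i \<noteq> c" using assms by (auto simp: v_def)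
  ultimately show ?thesis using memV_FF VR by blast
qed

lemma GG_sub_BB: "GG i c \<subseteq> BB" by (auto simp: GG_def BB_def)
lemma GG_sub_FF: "GG i c \<subseteq> FF i c" by (auto simp: GG_def FF_def)

lemma GG_common:
  assumes "j \<noteq> lc" "j' \<noteq> lc" "c = 0 \<or> c = 1" "c' = 0 \<or> c' = 1" "j \<noteq> j' \<or> c = c'"
  shows "\<exists>v\<in>V. v \<in> GG j c \<and> v \<in> GG j' c'"
proof -
  define v where "v = pt {k. (k = j \<and> c = 1) \<or> (k = j' \<and> c' = 1)}"
  have "v \<in> V" using assms(1,2) by (auto simp: v_def intro!: ptV)
  moreover have "v $ lc = 0" "v $ j = c" "v $ j' = c'" using assms by (auto simp: v_def)
  ultimately show ?thesis using memV_GG by blast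
qed

lemma GG_ne_GG: assumes "i \<noteq> lc" "i' \<noteq> lc" "i \<noteq> i'" shows "GG i 0 \<noteq> GG i' 0"
proof -
  have "pt {i'} \<in> V" using assms by (auto intro!: ptV)
  moreover have "pt {i'} $ i = 0" "pt {i'} $ lc = 0" "pt {i'} $ i' \<noteq> 0" using assms by auto
  ultimately show ?thesis using memV_GG by blast
qed

end


locale pair = P: fam VP + Q: fam VQ for VP VQ :: "(real,'n::{finite,linorder}) vec set" +
  fixes f :: "(real,'n) vec set \<Rightarrow> (real,'n) vec set"
  assumes fbij: "bij_betw f {F. F face_of convex hull VP} {G. G face_of convex hull VQ}"
  and ford: "\<forall>F1\<in>{F. F face_of convex hull VP}. \<forall>F2\<in>{F. F face_of convex hull VP}. F1 \<subseteq> F2 \<longleftrightarrow> f F1 \<subseteq> f F2"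
begin

lemma fface: "F face_of convex hull VP \<Longrightarrow> f F face_of convex hull VQ"
  using fbij bij_betwE by blast

lemma fsurj: "G face_of convex hull VQ \<Longrightarrow> \<exists>F. F face_of convex hull VP \<and> f F = G"
  using fbij unfolding bij_betw_def by (metis (mono_tags, lifting) image_iff mem_Collect_eq)

lemma finj: "F1 face_of convex hull VP \<Longrightarrow> F2 face_of convex hull VP \<Longrightarrow> f F1 = f F2 \<Longrightarrow> F1 = F2"
  using fbij unfolding bij_betw_def inj_on_def by blast

lemma fsub: "F1 face_of convex hull VP \<Longrightarrow> F2 face_of convex hull VP \<Longrightarrow> F1 \<subseteq> F2 \<longleftrightarrow> f F1 \<subseteq> f F2"
  using ford by blast

lemma fempty: "f {} = {}"
proof -
  obtain Y where Y: "Y face_of convex hull VP" "f Y = {}" using fsurj[of "{}"] by auto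
  have "f {} \<subseteq> f Y" using fsub[of "{}" Y] Y(1) by simp
  then show ?thesis using Y(2) by simp
qed

lemma ftop: "f (convex hull VP) = convex hull VQ"
proof -
  have RP: "convex hull VP face_of convex hull VP" by (simp add: face_of_refl)
  obtain Y where Y: "Y face_of convex hull VP" "f Y = convex hull VQ"
    using fsurj[of "convex hull VQ"] by (auto simp: face_of_refl)
  have "f Y \<subseteq> f (convex hull VP)" using fsub[OF Y(1) RP] face_of_imp_subset[OF Y(1)] by simp
  moreover have "f (convex hull VP) \<subseteq> convex hull VQ" using face_of_imp_subset[OF fface[OF RP]] .
  ultimately show ?thesis using Y(2) by simp
qed

lemma fatom:
  assumes v: "v \<in> VP" shows "\<exists>w\<in>VQ. f {v} = {w}"
proof -
  have fv: "{v} face_of convex hull VP" by (rule P.vertex_face_R[OF v])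
  have E: "{} face_of convex hull VP" by simp
  have ne: "f {v} \<noteq> {}"
  proof
    assume "f {v} = {}"
    then have "f {v} = f {}" by (simp add: fempty)
    then have "{v} = {}" using finj[OF fv E] by blast
    then show False by simp
  qed
  obtain w where w: "w \<in> VQ" "w \<in> f {v}"
    using face_nonempty_vertex[OF Q.Vcube fface[OF fv] ne] by blast
  obtain Y where Y: "Y face_of convex hull VP" "f Y = {w}"
    using fsurj[OF Q.vertex_face_R[OF w(1)]] by blast
  have "Y \<subseteq> {v}" using fsub[OF Y(1) fv] Y(2) w(2) by simp
  moreover have "Y \<noteq> {}" using Y(2) fempty by auto
  ultimately have "Y = {v}" by blast
  then show ?thesis using Y(2) w(1) by blast
qed

definition phi where "phi v = (SOME w. w \<in> VQ \<and> f {v} = {w})"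

lemma phi: "v \<in> VP \<Longrightarrow> phi v \<in> VQ \<and> f {v} = {phi v}"
  unfolding phi_def using fatom by (metis (mono_tags, lifting) someI_ex)

lemma mem_iff:
  assumes F: "F face_of convex hull VP" and v: "v \<in> VP"
  shows "v \<in> F \<longleftrightarrow> phi v \<in> f F"
proof -
  have "v \<in> F \<longleftrightarrow> {v} \<subseteq> F" by simp
  also have "\<dots> \<longleftrightarrow> f {v} \<subseteq> f F" by (rule fsub[OF P.vertex_face_R[OF v] F])
  also have "\<dots> \<longleftrightarrow> phi v \<in> f F" using phi[OF v] by simp
  finally show ?thesis .
qed

lemma phi_inj: "inj_on phi VP"
proof (rule inj_onI)
  fix v v' assume v: "v \<in> VP" "v' \<in> VP" "phi v = phi v'"
  then have "f {v} = f {v'}" using phi by metis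
  then have "{v} = {v'}" using finj[OF P.vertex_face_R P.vertex_face_R] v by blast
  then show "v = v'" by simp
qed

lemma phi_surj: "phi ` VP = VQ"
proof
  show "phi ` VP \<subseteq> VQ" using phi by blast
  show "VQ \<subseteq> phi ` VP"
  proof
    fix w assume w: "w \<in> VQ"
    obtain Y where Y: "Y face_of convex hull VP" "f Y = {w}"
      using fsurj[OF Q.vertex_face_R[OF w]] by blast
    have "Y \<noteq> {}" using Y(2) fempty by auto
    then obtain v where v: "v \<in> VP" "v \<in> Y" using face_nonempty_vertex[OF P.Vcube Y(1)] by blast
    then have "phi v \<in> f Y" using mem_iff[OF Y(1)] by blast
    then have "phi v = w" using Y(2) by simp
    then show "w \<in> phi ` VP" using v(1) by blast
  qed
qed

lemma phi_image:
  assumes F: "F face_of convex hull VP" shows "f F \<inter> VQ = phi ` (F \<inter> VP)"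
proof
  show "phi ` (F \<inter> VP) \<subseteq> f F \<inter> VQ" using mem_iff[OF F] phi by blast
  show "f F \<inter> VQ \<subseteq> phi ` (F \<inter> VP)"
  proof
    fix w assume w: "w \<in> f F \<inter> VQ"
    then obtain v where v: "v \<in> VP" "w = phi v" using phi_surj by blast
    then have "v \<in> F" using mem_iff[OF F v(1)] w by blast
    then show "w \<in> phi ` (F \<inter> VP)" using v by blast
  qed
qed

lemma card_pres:
  assumes F: "F face_of convex hull VP" shows "card (f F \<inter> VQ) = card (F \<inter> VP)"
  unfolding phi_image[OF F] by (rule card_image) (rule inj_on_subset[OF phi_inj], blast)

lemma fB: "f P.BB = Q.BB"
proof (rule Q.big_face)
  show "f P.BB face_of convex hull VQ" by (rule fface[OF P.BB_face])
  show "f P.BB \<noteq> convex hull VQ"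
  proof
    assume "f P.BB = convex hull VQ"
    then have "f P.BB = f (convex hull VP)" by (simp add: ftop)
    then have "P.BB = convex hull VP" using finj[OF P.BB_face] by (simp add: face_of_refl)
    then show False using P.R_not_BB by simp
  qed
  have "card (f P.BB \<inter> VQ) = card (P.BB \<inter> VP)" by (rule card_pres[OF P.BB_face])
  also have "\<dots> = card (Bot::(real,'n) vec set)" by (simp add: P.BB_V)
  finally show "card (Bot::(real,'n) vec set) \<le> card (f P.BB \<inter> VQ)" by simp
qed

end


context pair begin

lemma fG:
  assumes i: "i \<noteq> last_coord" and c: "c = 0 \<or> c = 1"
  shows "\<exists>j c'. j \<noteq> last_coord \<and> (c' = 0 \<or> c' = 1) \<and> f (P.GG i c) = Q.GG j c'"
proof -
  have G: "P.GG i c face_of convex hull VP" by (rule P.GG_face[OF c])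
  have XB: "f (P.GG i c) \<subseteq> Q.BB"
    using fsub[OF G P.BB_face] P.GG_sub_BB fB by simp
  have Xne: "f (P.GG i c) \<noteq> Q.BB"
  proof
    assume "f (P.GG i c) = Q.BB"
    then have "f (P.GG i c) = f P.BB" by (simp add: fB)
    then have "P.GG i c = P.BB" using finj[OF G P.BB_face] by simp
    then show False using P.GG_ne_BB[OF i c] by simp
  qed
  obtain j c' where jc: "j \<noteq> last_coord" "c' = 0 \<or> c' = 1" "f (P.GG i c) \<subseteq> Q.GG j c'"
    using Q.sub_B[OF fface[OF G] XB Xne] by blast
  obtain Y where Y: "Y face_of convex hull VP" "f Y = Q.GG j c'"
    using fsurj[OF Q.GG_face[OF jc(2)]] by blast
  have "f Y \<subseteq> f P.BB" using Y(2) Q.GG_sub_BB fB by simp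
  then have YB: "Y \<subseteq> P.BB" using fsub[OF Y(1) P.BB_face] by simp
  have "f (P.GG i c) \<subseteq> f Y" using jc(3) Y(2) by simp
  then have GY: "P.GG i c \<subseteq> Y" using fsub[OF G Y(1)] by simp
  have "Y = P.GG i c \<or> Y = P.BB \<or> Y = P.FF i c \<or> Y = convex hull VP"
    by (rule P.over_G[OF i c Y(1) GY])
  moreover have "Y \<noteq> P.FF i c" using YB P.FF_not_BB[OF i c] by blast
  moreover have "Y \<noteq> convex hull VP" using YB P.R_not_BB by blast
  moreover have "Y \<noteq> P.BB"
  proof
    assume "Y = P.BB"
    then have "Q.GG j c' = Q.BB" using Y(2) fB by simp
    then show False using Q.GG_ne_BB[OF jc(1,2)] by simp
  qed
  ultimately have "Y = P.GG i c" by blast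
  then show ?thesis using Y(2) jc(1,2) by blast
qed

lemma fF:
  assumes i: "i \<noteq> last_coord" and c: "c = 0 \<or> c = 1" and j: "j \<noteq> last_coord" and c': "c' = 0 \<or> c' = 1"
    and e: "f (P.GG i c) = Q.GG j c'"
  shows "f (P.FF i c) = Q.FF j c'"
proof -
  have FP: "P.FF i c face_of convex hull VP" by (rule P.FF_face[OF c])
  have GP: "P.GG i c face_of convex hull VP" by (rule P.GG_face[OF c])
  have RP: "convex hull VP face_of convex hull VP" by (simp add: face_of_refl)
  have "Q.GG j c' \<subseteq> f (P.FF i c)" using fsub[OF GP FP] P.GG_sub_FF e by simp
  then have "f (P.FF i c) = Q.GG j c' \<or> f (P.FF i c) = Q.BB \<or> f (P.FF i c) = Q.FF j c' \<or> f (P.FF i c) = convex hull VQ"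
    by (rule Q.over_G[OF j c' fface[OF FP]])
  moreover have "f (P.FF i c) \<noteq> Q.GG j c'"
  proof
    assume "f (P.FF i c) = Q.GG j c'"
    then have "P.FF i c = P.GG i c" using finj[OF FP GP] e by simp
    then have "P.FF i c \<subseteq> P.BB" using P.GG_sub_BB by simp
    then show False using P.FF_not_BB[OF i c] by simp
  qed
  moreover have "f (P.FF i c) \<noteq> Q.BB"
  proof
    assume "f (P.FF i c) = Q.BB"
    then have "P.FF i c = P.BB" using finj[OF FP P.BB_face] fB by simp
    then show False using P.FF_not_BB[OF i c] by simp
  qed
  moreover have "f (P.FF i c) \<noteq> convex hull VQ"
  proof
    assume "f (P.FF i c) = convex hull VQ"
    then have "P.FF i c = convex hull VP" using finj[OF FP RP] ftop by simp
    then show False using P.FF_ne_R[OF i c] by simp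
  qed
  ultimately show ?thesis by blast
qed

lemma fG_pair:
  assumes i: "i \<noteq> last_coord"
  shows "\<exists>j t. j \<noteq> last_coord \<and> (t = (0::real) \<or> t = 1) \<and>
    (\<forall>c. c = 0 \<or> c = 1 \<longrightarrow> f (P.GG i c) = Q.GG j (if t = 0 then c else 1 - c))"
proof -
  have c0: "(0::real) = 0 \<or> (0::real) = 1" by simp
  have c1: "(1::real) = 0 \<or> (1::real) = 1" by simp
  obtain j0 c0 where A: "j0 \<noteq> last_coord" "c0 = 0 \<or> c0 = 1" "f (P.GG i 0) = Q.GG j0 c0"
    using fG[OF i c0] by blast
  obtain j1 c1 where B: "j1 \<noteq> last_coord" "c1 = 0 \<or> c1 = 1" "f (P.GG i 1) = Q.GG j1 c1"
    using fG[OF i c1] by blast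
  have jc: "j0 = j1 \<and> c0 \<noteq> c1"
  proof (rule ccontr)
    assume "\<not> (j0 = j1 \<and> c0 \<noteq> c1)"
    then have "j0 \<noteq> j1 \<or> c0 = c1" by blast
    then obtain w where w: "w \<in> VQ" "w \<in> Q.GG j0 c0" "w \<in> Q.GG j1 c1"
      using Q.GG_common[OF A(1) B(1) A(2) B(2)] by blast
    then obtain v where v: "v \<in> VP" "w = phi v" using phi_surj by blast
    have "phi v \<in> f (P.GG i 0)" using A(3) w(2) v(2) by simp
    then have "v \<in> P.GG i 0" using mem_iff[OF P.GG_face[OF c0] v(1)] by blast
    moreover have "phi v \<in> f (P.GG i 1)" using B(3) w(3) v(2) by simp
    then have "v \<in> P.GG i 1" using mem_iff[OF P.GG_face[OF c1] v(1)] by blast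
    ultimately show False using P.memV_GG[OF v(1)] by simp
  qed
  have j01: "j1 = j0" using jc by simp
  have c01: "c1 = 1 - c0" using A(2) B(2) jc by auto
  have X: "\<forall>c. c = 0 \<or> c = 1 \<longrightarrow> f (P.GG i c) = Q.GG j0 (if c0 = 0 then c else 1 - c)"
  proof (intro allI impI)
    fix c :: real assume "c = 0 \<or> c = 1"
    then show "f (P.GG i c) = Q.GG j0 (if c0 = 0 then c else 1 - c)"
    proof
      assume cc: "c = 0"
      have e: "(if c0 = 0 then c else 1 - c) = c0" using A(2) cc by auto
      have "f (P.GG i c) = Q.GG j0 c0" using A(3) cc by simp
      then show ?thesis by (simp only: e)
    next
      assume cc: "c = 1"
      have e: "(if c0 = 0 then c else 1 - c) = 1 - c0" using A(2) cc by auto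
      have "f (P.GG i c) = Q.GG j0 (1 - c0)" using B(3) cc by (simp only: j01 c01)
      then show ?thesis by (simp only: e)
    qed
  qed
  show ?thesis
    apply (rule exI[of _ j0])
    apply (rule exI[of _ c0])
    using A(1,2) X by blast
qed

end


context pair begin

lemma main_zo: "\<exists>g\<in>cube_syms. g ` (convex hull VP) = convex hull VQ"
proof -
  define lc where "lc = (last_coord::'n)"
  define Pr where "Pr i j t \<longleftrightarrow> j \<noteq> lc \<and> (t = (0::real) \<or> t = 1) \<and>
    (\<forall>c. c = 0 \<or> c = 1 \<longrightarrow> f (P.GG i c) = Q.GG j (if t = 0 then c else 1 - c))" for i j t
  have ex: "\<exists>j t. Pr i j t" if "i \<noteq> lc" for i
    using fG_pair that unfolding Pr_def lc_def by blast
  define \<sigma> where "\<sigma> i = (SOME j. \<exists>t. Pr i j t)" for i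
  define \<tau> where "\<tau> i = (SOME t. Pr i (\<sigma> i) t)" for i
  have Pr: "Pr i (\<sigma> i) (\<tau> i)" if "i \<noteq> lc" for i
  proof -
    have "\<exists>t. Pr i (\<sigma> i) t" unfolding \<sigma>_def using someI_ex[OF ex[OF that]] .
    then show ?thesis unfolding \<tau>_def by (rule someI_ex)
  qed
  have \<sigma>l: "\<sigma> i \<noteq> lc" if "i \<noteq> lc" for i using Pr[OF that] by (simp add: Pr_def)
  have \<tau>01: "\<tau> i = 0 \<or> \<tau> i = 1" if "i \<noteq> lc" for i using Pr[OF that] by (simp add: Pr_def)
  have fGi: "f (P.GG i c) = Q.GG (\<sigma> i) (if \<tau> i = 0 then c else 1 - c)" if "i \<noteq> lc" "c = 0 \<or> c = 1" for i c
    using Pr[OF that(1)] that(2) unfolding Pr_def by blast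
  have t01: "(if \<tau> i = 0 then c else 1 - c) = 0 \<or> (if \<tau> i = 0 then c else 1 - c) = 1"
    if "c = (0::real) \<or> c = 1" for i c using that by auto
  have fFi: "f (P.FF i c) = Q.FF (\<sigma> i) (if \<tau> i = 0 then c else 1 - c)" if "i \<noteq> lc" "c = 0 \<or> c = 1" for i c
    by (rule fF[OF that(1)[unfolded lc_def] that(2) \<sigma>l[OF that(1), unfolded lc_def] t01[OF that(2)] fGi[OF that]])
  have coord: "phi v $ \<sigma> i = (if \<tau> i = 0 then v $ i else 1 - v $ i)" if v: "v \<in> VP" and i: "i \<noteq> lc" for v i
  proof -
    define c where "c = v $ i"
    have c01: "c = 0 \<or> c = 1" using P.Vcoord[OF v] by (simp add: c_def)
    have "v \<in> P.FF i c" using P.memV_FF[OF v] by (simp add: c_def)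
    then have "phi v \<in> f (P.FF i c)" using mem_iff[OF P.FF_face[OF c01] v] by blast
    then have "phi v \<in> Q.FF (\<sigma> i) (if \<tau> i = 0 then c else 1 - c)" using fFi[OF i c01] by simp
    then show ?thesis using Q.memV_FF phi[OF v] by (simp add: c_def)
  qed
  have coordl: "phi v $ lc = v $ lc" if v: "v \<in> VP" for v
  proof -
    have "v \<in> P.BB \<longleftrightarrow> phi v \<in> Q.BB" using mem_iff[OF P.BB_face v] fB by simp
    then have "v $ lc = 0 \<longleftrightarrow> phi v $ lc = 0"
      using P.memV_BB[OF v] Q.memV_BB phi[OF v] by (simp add: lc_def)
    moreover have "v $ lc = 0 \<or> v $ lc = 1" by (rule P.Vcoord[OF v])
    moreover have "phi v $ lc = 0 \<or> phi v $ lc = 1" using Q.Vcoord phi[OF v] by blast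
    ultimately show ?thesis by auto
  qed
  have \<sigma>inj: "i = i'" if "i \<noteq> lc" "i' \<noteq> lc" "\<sigma> i = \<sigma> i'" for i i'
  proof (rule ccontr)
    assume ne: "i \<noteq> i'"
    have z0: "(0::real) = 0 \<or> (0::real) = 1" by simp
    have v0: "pt {} \<in> VP" by (rule P.ptV) simp
    have "pt {} \<in> P.GG i 0" "pt {} \<in> P.GG i' 0" using P.memV_GG[OF v0] by auto
    then have "phi (pt {}) \<in> f (P.GG i 0)" "phi (pt {}) \<in> f (P.GG i' 0)"
      using mem_iff[OF P.GG_face[OF z0] v0] by blast+
    note m = this
    define t where "t = (if \<tau> i = 0 then 0 else 1 - (0::real))"
    define t' where "t' = (if \<tau> i' = 0 then 0 else 1 - (0::real))"
    have A: "f (P.GG i 0) = Q.GG (\<sigma> i) t" unfolding t_def by (rule fGi[OF that(1) z0])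
    have B: "f (P.GG i' 0) = Q.GG (\<sigma> i) t'" unfolding t'_def that(3) by (rule fGi[OF that(2) z0])
    have w: "phi (pt {}) \<in> VQ" using phi[OF v0] by blast
    have "phi (pt {}) $ \<sigma> i = t" using m(1) A Q.memV_GG[OF w] by blast
    moreover have "phi (pt {}) $ \<sigma> i = t'" using m(2) B Q.memV_GG[OF w] by blast
    ultimately have "t = t'" by simp
    then have "f (P.GG i 0) = f (P.GG i' 0)" using A B by simp
    then have "P.GG i 0 = P.GG i' 0" using finj[OF P.GG_face[OF z0] P.GG_face[OF z0]] by simp
    then show False using P.GG_ne_GG[OF that(1,2)[unfolded lc_def] ne] by simp
  qed
  define \<pi> where "\<pi> k = (if k = lc then lc else \<sigma> k)" for k
  have inj\<pi>: "inj \<pi>"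
  proof (rule injI)
    fix x y assume e: "\<pi> x = \<pi> y"
    show "x = y"
    proof (cases "x = lc"; cases "y = lc")
      assume "x = lc" "y = lc" then show ?thesis by simp
    next
      assume "x = lc" "y \<noteq> lc" then show ?thesis using e \<sigma>l[of y] by (simp add: \<pi>_def)
    next
      assume "x \<noteq> lc" "y = lc" then show ?thesis using e \<sigma>l[of x] by (simp add: \<pi>_def)
    next
      assume "x \<noteq> lc" "y \<noteq> lc" then show ?thesis using e \<sigma>inj[of x y] by (simp add: \<pi>_def)
    qed
  qed
  have "surj \<pi>" using finite_UNIV_inj_surj[OF _ inj\<pi>] by simp
  then have bij\<pi>: "bij_betw \<pi> UNIV UNIV" using inj\<pi> by (simp add: bij_betw_def)
  have perm\<pi>: "\<pi> permutes UNIV" by (rule bij_imp_permutes[OF bij\<pi>]) simp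
  define \<rho> where "\<rho> = inv \<pi>"
  have perm\<rho>: "\<rho> permutes UNIV" unfolding \<rho>_def by (rule permutes_inv[OF perm\<pi>])
  have \<pi>\<rho>: "\<pi> (\<rho> k) = k" for k unfolding \<rho>_def by (rule permutes_inverses(1)[OF perm\<pi>])
  define s where "s k \<longleftrightarrow> k \<noteq> lc \<and> \<tau> (\<rho> k) = 1" for k
  have gv: "nf \<rho> s v = phi v" if v: "v \<in> VP" for v
  proof -
    have "nf \<rho> s v $ k = phi v $ k" for k
    proof (cases "k = lc")
      case True
      have "\<rho> k = lc"
      proof (rule ccontr)
        assume "\<rho> k \<noteq> lc"
        then have "\<pi> (\<rho> k) \<noteq> lc" using \<sigma>l by (simp add: \<pi>_def)
        then show False using \<pi>\<rho>[of k] True by simp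
      qed
      then show ?thesis using True coordl[OF v] by (simp add: nf_nth s_def)
    next
      case False
      have il: "\<rho> k \<noteq> lc"
      proof
        assume "\<rho> k = lc"
        then have "\<pi> (\<rho> k) = lc" by (simp add: \<pi>_def)
        then show False using \<pi>\<rho>[of k] False by simp
      qed
      then have sk: "\<sigma> (\<rho> k) = k" using \<pi>\<rho>[of k] by (simp add: \<pi>_def)
      have "phi v $ k = (if \<tau> (\<rho> k) = 0 then v $ \<rho> k else 1 - v $ \<rho> k)"
        using coord[OF v il] sk by simp
      then show ?thesis using False \<tau>01[OF il] by (auto simp: nf_nth s_def)
    qed
    then show ?thesis by (simp add: vec_eq_iff)
  qed
  have "nf \<rho> s ` VP = phi ` VP" using gv by (rule image_cong[OF refl])
  then have "nf \<rho> s ` VP = VQ" using phi_surj by simp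
  then have "nf \<rho> s ` (convex hull VP) = convex hull VQ" by (simp add: nf_hull)
  moreover have "nf \<rho> s \<in> cube_syms" by (rule nf_sym[OF perm\<rho>])
  ultimately show ?thesis by blast
qed

end


lemma hull_inj_cube:
  assumes "A \<subseteq> cube01" "B \<subseteq> cube01" "convex hull A = convex hull B" shows "A = B"
proof
  show "A \<subseteq> B"
  proof
    fix x assume x: "x \<in> A"
    then have "x \<in> convex hull B" using hull_inc[OF x, of convex] assms(3) by simp
    then show "x \<in> B" using cube_in_hull[OF assms(2)] x assms(1) by blast
  qed
  show "B \<subseteq> A"
  proof
    fix x assume x: "x \<in> B"
    then have "x \<in> convex hull A" using hull_inc[OF x, of convex] assms(3) by simp
    then show "x \<in> A" using cube_in_hull[OF assms(1)] x assms(2) by blast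
  qed
qed

lemma card_Bot: "card (Bot::((real,'n::{finite,linorder}) vec) set) = 2 ^ (CARD('n) - 1)"
proof -
  have e: "(Bot::((real,'n) vec) set) = pt ` Pow (UNIV - {last_coord})"
  proof
    show "pt ` Pow (UNIV - {last_coord}) \<subseteq> (Bot::((real,'n) vec) set)" by (auto simp: pt_Bot)
    show "(Bot::((real,'n) vec) set) \<subseteq> pt ` Pow (UNIV - {last_coord})"
    proof
      fix x :: "(real,'n) vec" assume x: "x \<in> Bot"
      then have "x = pt {i. x $ i = 1}" using cube_eq_pt by (auto simp: Bot_def)
      moreover have "{i. x $ i = 1} \<in> Pow (UNIV - {last_coord})" using x by (auto simp: Bot_def)
      ultimately show "x \<in> pt ` Pow (UNIV - {last_coord})" by blast
    qed
  qed
  have i: "inj_on (pt :: 'n set \<Rightarrow> (real,'n) vec) (Pow (UNIV - {last_coord::'n}))" by (auto simp: inj_on_def pt_inj)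
  have "card ((pt :: 'n set \<Rightarrow> (real,'n) vec) ` Pow (UNIV - {last_coord})) = card (Pow (UNIV - {last_coord::'n}))"
    by (rule card_image[OF i])
  then have "card (Bot::((real,'n) vec) set) = card (Pow (UNIV - {last_coord::'n}))"
    unfolding e .
  also have "\<dots> = 2 ^ (CARD('n) - 1)" by (simp add: card_Pow card_Diff_singleton)
  finally show ?thesis .
qed

lemma Fd_vs_iff:
  assumes "(first_coord::'n::{finite,linorder}) \<noteq> last_coord"
  shows "V \<in> (Fd_vertex_sets :: ((real,'n) vec) set set) \<longleftrightarrow> V \<subseteq> cube01 \<and> Bot \<subseteq> V \<and> pt {last_coord} \<in> V \<and> pt UNIV \<in> V
     \<and> pt {last_coord, first_coord} \<notin> V \<and> pt (- {first_coord}) \<notin> V"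
proof -
  have e1: "pt {i} + pt {j} = (pt {i, j} :: (real,'n) vec)" if "i \<noteq> j" for i j
    using that by (auto simp: vec_eq_iff)
  have e2: "pt UNIV - pt {i} = (pt (- {i}) :: (real,'n) vec)" for i
    by (auto simp: vec_eq_iff)
  show ?thesis using assms by (simp add: Fd_vertex_sets_def Bot_def axis_pt one_pt e1 e2)
qed

lemma card_Fd_vs:
  assumes d: "CARD('n::{finite,linorder}) \<ge> 3"
  shows "card (Fd_vertex_sets :: ((real,'n) vec) set set) = 2 ^ (2 ^ (CARD('n) - 1) - 4)"
proof -
  let ?l = "last_coord::'n" and ?f = "first_coord::'n"
  have fl: "?f \<noteq> ?l" by (rule card3_facts(1)[OF d])
  obtain k :: 'n where k: "k \<noteq> ?f" "k \<noteq> ?l" using card3_facts(2)[OF d] by blast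
  define a where "a = (pt {?l} :: (real,'n) vec)"
  define b where "b = (pt UNIV :: (real,'n) vec)"
  define c where "c = (pt {?l, ?f} :: (real,'n) vec)"
  define e where "e = (pt (- {?f}) :: (real,'n) vec)"
  define X where "X = Top - {a, b, c, e}"
  define F where "F T = Bot \<union> {a, b} \<union> T" for T
  have abT: "a \<in> Top" "b \<in> Top" "c \<in> Top" "e \<in> Top" using fl by (auto simp: a_def b_def c_def e_def pt_Top)
  have dist: "a \<noteq> b" "a \<noteq> c" "a \<noteq> e" "b \<noteq> c" "b \<noteq> e" "c \<noteq> e"
    unfolding a_def b_def c_def e_def pt_inj using fl k by (auto simp: set_eq_iff)
  have cXcard: "card {a, b, c, e} = 4" using dist by auto
  have cX: "card X = 2 ^ (CARD('n) - 1) - 4"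
  proof -
    have sub: "{a, b, c, e} \<subseteq> Top" using abT by auto
    have "card X = card (Top::((real,'n) vec) set) - card {a, b, c, e}"
      unfolding X_def using card_Diff_subset[OF _ sub] by simp
    moreover have "card (Top::((real,'n) vec) set) = 2 ^ (CARD('n) - 1)" using card_Top card_Bot by metis
    ultimately show ?thesis using cXcard by simp
  qed
  have BT: "Bot \<inter> Top = {}" by (auto simp: Bot_def Top_def)
  have FX: "F T \<inter> X = T" if "T \<subseteq> X" for T
    using that BT by (auto simp: F_def X_def)
  have img: "Fd_vertex_sets = F ` Pow X"
  proof
    show "Fd_vertex_sets \<subseteq> F ` Pow X"
    proof
      fix V :: "((real,'n) vec) set" assume V: "V \<in> Fd_vertex_sets"
      then have Vp: "V \<subseteq> cube01" "Bot \<subseteq> V" "a \<in> V" "b \<in> V" "c \<notin> V" "e \<notin> V"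
        using Fd_vs_iff[OF fl] by (auto simp: a_def b_def c_def e_def)
      have "V = F (V \<inter> X)"
      proof
        show "F (V \<inter> X) \<subseteq> V" using Vp by (auto simp: F_def)
        show "V \<subseteq> F (V \<inter> X)"
        proof
          fix v assume v: "v \<in> V"
          then have "v \<in> cube01" using Vp by blast
          then have "v \<in> Bot \<or> v \<in> Top" using cube_coord[of v ?l] by (auto simp: Bot_def Top_def)
          then show "v \<in> F (V \<inter> X)" using v Vp by (auto simp: F_def X_def)
        qed
      qed
      moreover have "V \<inter> X \<in> Pow X" by simp
      ultimately show "V \<in> F ` Pow X" by blast
    qed
    show "F ` Pow X \<subseteq> Fd_vertex_sets"
    proof
      fix V assume "V \<in> F ` Pow X"
      then obtain T where T: "T \<subseteq> X" "V = F T" by blast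
      have "V \<subseteq> cube01" using T abT by (auto simp: F_def X_def Bot_def Top_def)
      moreover have "Bot \<subseteq> V" "a \<in> V" "b \<in> V" using T by (auto simp: F_def)
      moreover have "c \<notin> V" "e \<notin> V" using T dist abT BT by (auto simp: F_def X_def)
      ultimately show "V \<in> Fd_vertex_sets" using Fd_vs_iff[OF fl] by (simp add: a_def b_def c_def e_def)
    qed
  qed
  have inj: "inj_on F (Pow X)"
    by (rule inj_onI) (metis FX PowD)
  have "card (Fd_vertex_sets :: ((real,'n) vec) set set) = card (Pow X)"
    unfolding img by (rule card_image[OF inj])
  also have "\<dots> = 2 ^ card X" by (rule card_Pow) (simp add: X_def finite_Top)
  finally show ?thesis using cX by simp
qed

lemma card_Fd:
  assumes d: "CARD('n::{finite,linorder}) \<ge> 3"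
  shows "card (Fd :: ((real,'n) vec) set set) = 2 ^ (2 ^ (CARD('n) - 1) - 4)"
proof -
  have "inj_on (\<lambda>V. convex hull V) (Fd_vertex_sets :: ((real,'n) vec) set set)"
    by (rule inj_onI) (rule hull_inj_cube, auto simp: Fd_vertex_sets_def)
  then show ?thesis unfolding Fd_def using card_Fd_vs[OF d] by (simp add: card_image)
qed

lemma (in fam) aff_dim_R: "aff_dim R = int CARD('n)"
proof -
  have p0: "pt {} = (0::(real,'n) vec)" by (simp add: vec_eq_iff)
  have z: "(0::(real,'n) vec) \<in> V" using ptV[of "{}"] unfolding p0 by simp
  have B: "Basis \<subseteq> V"
  proof
    fix x :: "(real,'n) vec" assume "x \<in> Basis"
    then obtain i u where iu: "u \<in> (Basis::real set)" "x = axis i u" unfolding Basis_vec_def by blast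
    then have "u = 1" by simp
    then have "x = pt {i}" using iu by (simp add: axis_pt)
    show "x \<in> V"
    proof (cases "i = lc")
      case True then show ?thesis using ptl \<open>x = pt {i}\<close> by simp
    next
      case False then show ?thesis using ptV[of "{i}"] \<open>x = pt {i}\<close> by simp
    qed
  qed
  have "affine hull V = span V" by (rule affine_hull_span_0) (rule hull_inc[OF z])
  moreover have "span Basis \<subseteq> span V" by (rule span_mono[OF B])
  ultimately have "affine hull V = UNIV" unfolding span_Basis by auto
  then have "aff_dim V = int DIM((real,'n) vec)" using aff_dim_eq_full by blast
  then show ?thesis by (simp add: aff_dim_convex_hull)
qed


lemma aux_pow: "n \<ge> 3 \<Longrightarrow> n + 1 \<le> (2::nat) ^ (n - 1)"
proof (induction n rule: dec_induct)
  case base then show ?case by simp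
next
  case (step m)
  then have "Suc m + 1 \<le> 2 * 2 ^ (m - 1)" by simp
  also have "2 * 2 ^ (m - 1) = (2::nat) ^ (Suc m - 1)" using step(1)
    by (cases m) simp_all
  finally show ?case .
qed

lemma num_bound: "n \<ge> 5 \<Longrightarrow> fact n * 2 ^ n < (2::nat) ^ (2 ^ (n - 1) - 4)"
proof (induction n rule: dec_induct)
  case base then show ?case by (simp add: fact_numeral)
next
  case (step m)
  have m5: "m \<ge> 5" by fact
  have IH: "fact m * 2 ^ m < (2::nat) ^ (2 ^ (m - 1) - 4)" by fact
  have a1: "m + 1 \<le> (2::nat) ^ (m - 1)" using aux_pow m5 by simp
  have a2: "2 * (m + 1) \<le> (2::nat) ^ m"
  proof -
    have "2 * (m + 1) \<le> 2 * (2::nat) ^ (m - 1)" using a1 by simp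
    also have "\<dots> = 2 ^ m" using m5 by (cases m) simp_all
    finally show ?thesis .
  qed
  have a3: "(2::nat) ^ m \<le> 2 ^ (2 ^ (m - 1))"
    by (rule power_increasing) (use a1 in auto)
  have e: "(2::nat) ^ (Suc m - 1) - 4 = (2 ^ (m - 1) - 4) + 2 ^ (m - 1)"
  proof -
    have "(4::nat) \<le> 2 ^ (m - 1)" using a1 m5 by linarith
    moreover have "(2::nat) ^ (Suc m - 1) = 2 * 2 ^ (m - 1)" using m5
      by (cases m) simp_all
    ultimately show ?thesis by simp
  qed
  have "fact (Suc m) * 2 ^ Suc m = (2 * (m + 1)) * (fact m * 2 ^ m)" by (simp add: algebra_simps)
  also have "\<dots> < (2 * (m + 1)) * (2::nat) ^ (2 ^ (m - 1) - 4)"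
    using IH by (intro mult_strict_left_mono) simp_all
  also have "\<dots> \<le> 2 ^ (2 ^ (m - 1)) * (2::nat) ^ (2 ^ (m - 1) - 4)"
    by (rule mult_right_mono) (use a2 a3 in linarith, simp)
  also have "\<dots> = 2 ^ (2 ^ (Suc m - 1) - 4)" unfolding e by (simp add: power_add)
  finally show ?case .
qed

lemma stab:
  fixes VQ VP :: "(real,'n::{finite,linorder}) vec set"
  assumes fQ: "fam VQ" and fP: "fam VP" and p: "p permutes UNIV"
    and e: "nf p s ` (convex hull VQ) = convex hull VP"
  shows "p last_coord = last_coord \<and> \<not> s last_coord"
proof -
  interpret Q: fam VQ by (rule fQ)
  interpret P: fam VP by (rule fP)
  let ?l = "last_coord" and ?f = "first_coord"
  have img: "nf p s ` VQ = VP"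
  proof (rule hull_inj_cube)
    show "nf p s ` VQ \<subseteq> cube01" using Q.Vcube nf_cube by blast
    show "VP \<subseteq> cube01" by (rule P.Vcube)
    show "convex hull (nf p s ` VQ) = convex hull VP" using e by (simp add: nf_hull)
  qed
  define k0 where "k0 = inv p ?l"
  have pk0: "p k0 = ?l" unfolding k0_def by (rule permutes_inverses(1)[OF p])
  have ip: "inv p (p k) = k" for k by (rule permutes_inverses(2)[OF p])
  have main: "k0 = ?l \<and> \<not> s k0"
  proof (rule ccontr)
    assume H: "\<not> (k0 = ?l \<and> \<not> s k0)"
    define tg where "tg = (if s k0 then 1 else (0::real))"
    define y1 where "y1 = (pt {?l, ?f} :: (real,'n) vec)"
    define y2 where "y2 = (pt (- {?f}) :: (real,'n) vec)"
    define y where "y = (if y1 $ k0 = tg then y1 else y2)"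
    have yk0: "y $ k0 = tg"
    proof (cases "k0 = ?l")
      case True
      then have "s k0" using H by simp
      then show ?thesis using True P.fl by (simp add: y_def y1_def tg_def)
    next
      case False
      then show ?thesis by (auto simp: y_def y1_def y2_def tg_def)
    qed
    have ynot: "y \<notin> VP" using P.ptlf P.ptnf by (simp add: y_def y1_def y2_def)
    have ycube: "y \<in> cube01" by (simp add: y_def y1_def y2_def)
    define x where "x = (\<chi> m. if s (inv p m) then 1 - y $ inv p m else y $ inv p m)"
    have nfx: "nf p s x = y"
      by (simp add: vec_eq_iff nf_nth x_def ip)
    have "x \<in> cube01" using ycube by (auto simp: cube01_def x_def)
    moreover have "x $ ?l = 0" using yk0 by (simp add: x_def k0_def[symmetric] tg_def)
    ultimately have "x \<in> Bot" by (simp add: Bot_def)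
    then have "x \<in> VQ" using Q.BotV by blast
    then have "y \<in> VP" using img nfx by blast
    with ynot show False by simp
  qed
  then have k: "k0 = ?l" and ns: "\<not> s k0" by auto
  show ?thesis using pk0 ns unfolding k by simp
qed


lemma finite_Fd: "finite (Fd :: (real,'n::{finite,linorder}) vec set set)"
proof -
  have "(Fd_vertex_sets :: (real,'n) vec set set) \<subseteq> Pow cube01" by (auto simp: Fd_vertex_sets_def)
  then have "finite (Fd_vertex_sets :: (real,'n) vec set set)"
    by (rule finite_subset) (simp add: finite_cube01)
  then show ?thesis unfolding Fd_def by simp
qed

lemma card_G0:
  fixes l :: "'n::finite"
  shows "card ({p. p permutes (UNIV::'n set) \<and> p l = l} \<times> {s::'n \<Rightarrow> bool. \<not> s l})
    \<le> fact (CARD('n) - 1) * 2 ^ (CARD('n) - 1)"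
proof -
  have A: "card {p. p permutes (UNIV::'n set) \<and> p l = l} \<le> fact (CARD('n) - 1)"
  proof -
    have sub: "{p. p permutes (UNIV::'n set) \<and> p l = l} \<subseteq> {p. p permutes (UNIV - {l})}"
    proof
      fix p assume "p \<in> {p. p permutes (UNIV::'n set) \<and> p l = l}"
      then have p: "p permutes UNIV" "p l = l" by auto
      have "p permutes (UNIV - {l})"
        by (rule permutes_superset[OF p(1)]) (use p(2) in auto)
      then show "p \<in> {p. p permutes (UNIV - {l})}" by simp
    qed
    have fin: "finite {p. p permutes (UNIV - {l::'n})}" by (rule finite_subset[OF subset_UNIV]) simp
    have "card {p. p permutes (UNIV - {l::'n})} = fact (CARD('n) - 1)"
      by (rule card_permutations) (simp_all add: card_Diff_singleton)
    then show ?thesis using card_mono[OF fin sub] by simp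
  qed
  have B: "card {s::'n \<Rightarrow> bool. \<not> s l} \<le> 2 ^ (CARD('n) - 1)"
  proof -
    have sub: "{s::'n \<Rightarrow> bool. \<not> s l} \<subseteq> (\<lambda>A k. k \<in> A) ` Pow (UNIV - {l})"
    proof
      fix s :: "'n \<Rightarrow> bool" assume "s \<in> {s. \<not> s l}"
      then have "{k. s k} \<in> Pow (UNIV - {l})" "s = (\<lambda>k. k \<in> {k. s k})" by auto
      then show "s \<in> (\<lambda>A k. k \<in> A) ` Pow (UNIV - {l})" by blast
    qed
    have "card {s::'n \<Rightarrow> bool. \<not> s l} \<le> card ((\<lambda>A k. k \<in> A) ` Pow (UNIV - {l}))"
      by (rule card_mono[OF _ sub]) simp
    also have "\<dots> \<le> card (Pow (UNIV - {l}))" by (rule card_image_le) simp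
    also have "\<dots> = 2 ^ (CARD('n) - 1)" by (simp add: card_Pow card_Diff_singleton)
    finally show ?thesis .
  qed
  show ?thesis unfolding card_cartesian_product using A B by (rule mult_le_mono)
qed

lemma nf_id: "nf id (\<lambda>_. False) = id"
  by (simp add: fun_eq_iff vec_eq_iff nf_nth)

lemma part3:
  assumes d3: "CARD('n::{finite,linorder}) \<ge> 3"
    and P: "P \<in> (Fd :: (real,'n) vec set set)" and Q: "Q \<in> Fd"
  shows "zo_equivalent P Q \<longleftrightarrow> comb_equivalent P Q"
proof -
  obtain VP where VP: "VP \<in> Fd_vertex_sets" "P = convex hull VP" using P by (auto simp: Fd_def)
  obtain VQ where VQ: "VQ \<in> Fd_vertex_sets" "Q = convex hull VQ" using Q by (auto simp: Fd_def)
  have fP: "fam VP" using d3 VP(1) by (simp add: fam_def)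
  have fQ: "fam VQ" using d3 VQ(1) by (simp add: fam_def)
  show ?thesis
  proof
    assume "zo_equivalent P Q"
    then obtain g where "g \<in> cube_syms" "g ` P = Q" by (auto simp: zo_equivalent_def)
    then show "comb_equivalent P Q" by (rule zo_imp_comb)
  next
    assume "comb_equivalent P Q"
    then obtain f where f: "bij_betw f {F. F face_of P} {G. G face_of Q}"
      "\<forall>F1 \<in> {F. F face_of P}. \<forall>F2 \<in> {F. F face_of P}. F1 \<subseteq> F2 \<longleftrightarrow> f F1 \<subseteq> f F2"
      unfolding comb_equivalent_def by blast
    have "pair VP VQ f" unfolding pair_def pair_axioms_def using fP fQ f VP(2) VQ(2) by simp
    then have "\<exists>g\<in>cube_syms. g ` (convex hull VP) = convex hull VQ" by (rule pair.main_zo)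
    then show "zo_equivalent P Q" using VP(2) VQ(2) by (simp add: zo_equivalent_def)
  qed
qed


lemma part4:
  assumes d6: "CARD('n::{finite,linorder}) \<ge> 6"
  shows "\<exists>S \<subseteq> (Fd :: (real,'n) vec set set).
          card S > 2 ^ (2 ^ (CARD('n) - 2)) \<and> pairwise (\<lambda>P Q. \<not> comb_equivalent P Q) S"
proof -
  have d3: "CARD('n) \<ge> 3" using d6 by simp
  define l where "l = (last_coord :: 'n)"
  define G0 where "G0 = {p. p permutes (UNIV::'n set) \<and> p l = l} \<times> {s::'n \<Rightarrow> bool. \<not> s l}"
  define Orb where "Orb Q = (\<lambda>(p, s). nf p s ` Q) ` G0" for Q :: "(real,'n) vec set"
  define SS where "SS = {S. S \<subseteq> (Fd :: (real,'n) vec set set) \<and> pairwise (\<lambda>P Q. \<not> comb_equivalent P Q) S}"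
  have finFd: "finite (Fd :: (real,'n) vec set set)" by (rule finite_Fd)
  have finSS: "finite SS"
    by (rule finite_subset[of _ "Pow Fd"]) (auto simp: SS_def finFd)
  have eSS: "{} \<in> SS" by (simp add: SS_def)
  define m where "m = Max (card ` SS)"
  have "m \<in> card ` SS" unfolding m_def using finSS eSS by (intro Max_in) auto
  then obtain S0 where S0: "S0 \<in> SS" "card S0 = m" by blast
  have maxm: "card S \<le> m" if "S \<in> SS" for S unfolding m_def using finSS that by (intro Max_ge) auto
  have S0F: "S0 \<subseteq> Fd" and S0p: "pairwise (\<lambda>P Q. \<not> comb_equivalent P Q) S0" using S0(1) by (auto simp: SS_def)
  have finS0: "finite S0" using finite_subset[OF S0F finFd] .
  have finG0: "finite G0" by (rule finite_subset[OF subset_UNIV]) simp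
  have cover: "Fd \<subseteq> (\<Union>Q\<in>S0. Orb Q)"
  proof
    fix P assume P: "P \<in> (Fd :: (real,'n) vec set set)"
    show "P \<in> (\<Union>Q\<in>S0. Orb Q)"
    proof (cases "P \<in> S0")
      case True
      have "(id, \<lambda>_. False) \<in> G0" by (simp add: G0_def permutes_id)
      then have "nf id (\<lambda>_. False) ` P \<in> Orb P" unfolding Orb_def by force
      then have "P \<in> Orb P" by (simp add: nf_id)
      then show ?thesis using True by blast
    next
      case False
      have "insert P S0 \<notin> SS"
      proof
        assume "insert P S0 \<in> SS"
        then have "card (insert P S0) \<le> m" by (rule maxm)
        then show False using False finS0 S0(2) by simp
      qed
      moreover have "insert P S0 \<subseteq> Fd" using P S0F by blast
      ultimately have "\<not> pairwise (\<lambda>P Q. \<not> comb_equivalent P Q) (insert P S0)" by (simp add: SS_def)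
      then obtain y where y: "y \<in> S0" "y \<noteq> P" "comb_equivalent P y \<or> comb_equivalent y P"
        using S0p unfolding pairwise_insert by blast
      then have cy: "comb_equivalent y P" using comb_sym by blast
      have yF: "y \<in> Fd" using y(1) S0F by blast
      have "zo_equivalent y P" using part3[OF d3 yF P] cy by simp
      then obtain g where g: "g \<in> cube_syms" "g ` y = P" by (auto simp: zo_equivalent_def)
      obtain p s where ps: "p permutes UNIV" "g = nf p s" using sym_nf[OF g(1)] by blast
      obtain VQ where VQ: "VQ \<in> Fd_vertex_sets" "y = convex hull VQ" using yF by (auto simp: Fd_def)
      obtain VP where VP: "VP \<in> Fd_vertex_sets" "P = convex hull VP" using P by (auto simp: Fd_def)
      have fP: "fam VP" using d3 VP(1) by (simp add: fam_def)
      have fQ: "fam VQ" using d3 VQ(1) by (simp add: fam_def)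
      have "p last_coord = last_coord \<and> \<not> s last_coord"
        by (rule stab[OF fQ fP ps(1)]) (use g(2) ps(2) VP(2) VQ(2) in simp)
      then have "(p, s) \<in> G0" using ps(1) by (simp add: G0_def l_def)
      then have "nf p s ` y \<in> Orb y" unfolding Orb_def by force
      then show ?thesis using g(2) ps(2) y(1) by blast
    qed
  qed
  have finU: "finite (\<Union>Q\<in>S0. Orb Q)" using finS0 finG0 by (simp add: Orb_def)
  have "card (Fd :: (real,'n) vec set set) \<le> card (\<Union>Q\<in>S0. Orb Q)" by (rule card_mono[OF finU cover])
  also have "\<dots> \<le> (\<Sum>Q\<in>S0. card (Orb Q))" by (rule card_UN_le[OF finS0])
  also have "\<dots> \<le> (\<Sum>Q\<in>S0. card G0)" by (rule sum_mono) (simp add: Orb_def card_image_le finG0)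
  also have "\<dots> = card S0 * card G0" by simp
  also have "\<dots> \<le> card S0 * (fact (CARD('n) - 1) * 2 ^ (CARD('n) - 1))"
    using card_G0[of l] by (simp add: G0_def)
  finally have le: "2 ^ (2 ^ (CARD('n) - 1) - 4) \<le> card S0 * (fact (CARD('n) - 1) * 2 ^ (CARD('n) - 1))"
    using card_Fd[OF d3] by simp
  have nb: "fact (CARD('n) - 1) * 2 ^ (CARD('n) - 1) < (2::nat) ^ (2 ^ (CARD('n) - 2) - 4)"
  proof -
    have e2: "CARD('n) - 1 - 1 = CARD('n) - 2" by simp
    have "5 \<le> CARD('n) - 1" using d6 by simp
    from num_bound[OF this] show ?thesis unfolding e2 .
  qed
  have ex: "(2::nat) ^ (CARD('n) - 1) - 4 = 2 ^ (CARD('n) - 2) + (2 ^ (CARD('n) - 2) - 4)"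
  proof -
    have s1: "CARD('n) - 1 = Suc (CARD('n) - 2)" using d6 by simp
    have "(2::nat) ^ (CARD('n) - 1) = 2 * 2 ^ (CARD('n) - 2)" unfolding s1 by simp
    moreover have "(4::nat) \<le> 2 ^ (CARD('n) - 2)"
    proof -
      have "(2::nat) ^ 2 \<le> 2 ^ (CARD('n) - 2)" by (rule power_increasing) (use d6 in simp_all)
      then show ?thesis by simp
    qed
    ultimately show ?thesis by simp
  qed
  have "card S0 > 2 ^ (2 ^ (CARD('n) - 2))"
  proof (rule ccontr)
    assume "\<not> card S0 > 2 ^ (2 ^ (CARD('n) - 2))"
    then have c: "card S0 \<le> 2 ^ (2 ^ (CARD('n) - 2))" by simp
    have "card S0 * (fact (CARD('n) - 1) * 2 ^ (CARD('n) - 1))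
        \<le> 2 ^ (2 ^ (CARD('n) - 2)) * (fact (CARD('n) - 1) * 2 ^ (CARD('n) - 1))"
      using c by (rule mult_right_mono) simp
    also have "\<dots> < 2 ^ (2 ^ (CARD('n) - 2)) * 2 ^ (2 ^ (CARD('n) - 2) - 4)"
      using nb by simp
    also have "\<dots> = 2 ^ (2 ^ (CARD('n) - 1) - 4)" unfolding ex by (simp add: power_add)
    finally show False using le by simp
  qed
  then show ?thesis using S0F S0p by blast
qed

theorem mainTheorem3:
  assumes "CARD('n::{finite,linorder}) \<ge> 3"
  shows "card (Fd :: (real^'n::{finite,linorder}) set set) = 2 ^ (2 ^ (CARD('n::{finite,linorder}) - 1) - 4)
    \<and> (\<forall>P \<in> (Fd :: (real^'n::{finite,linorder}) set set). aff_dim P = int CARD('n::{finite,linorder}))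
    \<and> (\<forall>P \<in> (Fd :: (real^'n::{finite,linorder}) set set). \<forall>Q \<in> Fd. zo_equivalent P Q \<longleftrightarrow> comb_equivalent P Q)
    \<and> (CARD('n::{finite,linorder}) \<ge> 6 \<longrightarrow> (\<exists>S \<subseteq> (Fd :: (real^'n::{finite,linorder}) set set).
          card S > 2 ^ (2 ^ (CARD('n::{finite,linorder}) - 2)) \<and> pairwise (\<lambda>P Q. \<not> comb_equivalent P Q) S))"
proof (intro conjI)
  show "card (Fd :: (real,'n) vec set set) = 2 ^ (2 ^ (CARD('n) - 1) - 4)" by (rule card_Fd[OF assms])
  show "\<forall>P \<in> (Fd :: (real,'n) vec set set). aff_dim P = int CARD('n)"
  proof
    fix P assume "P \<in> (Fd :: (real,'n) vec set set)"
    then obtain V where V: "V \<in> Fd_vertex_sets" "P = convex hull V" by (auto simp: Fd_def)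
    have "fam V" using assms V(1) by (simp add: fam_def)
    then show "aff_dim P = int CARD('n)" using fam.aff_dim_R V(2) by blast
  qed
  show "\<forall>P \<in> (Fd :: (real,'n) vec set set). \<forall>Q \<in> Fd. zo_equivalent P Q \<longleftrightarrow> comb_equivalent P Q"
    using part3[OF assms] by blast
  show "CARD('n) \<ge> 6 \<longrightarrow> (\<exists>S \<subseteq> (Fd :: (real,'n) vec set set).
          card S > 2 ^ (2 ^ (CARD('n) - 2)) \<and> pairwise (\<lambda>P Q. \<not> comb_equivalent P Q) S)"
    using part4 by blast
qed

end
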